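(* Let $G$ be a connected Lie group with universal cover $\widetilde G$, and let $\Gamma$ be an exponent-canceling group with a fixed generating set $\gamma_1,\ldots,\gamma_r$ such that every relation in a finite presentation on these generators has trivial Abelianization; embed $\mathrm{Hom}(\Gamma,H)\subset H^r$ via $\rho\mapsto(\rho(\gamma_1),\ldots,\rho(\gamma_r))$ for $H=G,\widetilde G$. For $1\le k\le r$, let $\iota_k\colon G\to\mathrm{Hom}^0(\Gamma,G)$ be the $k$-th factor inclusion $g\mapsto(e,\ldots,e,g,e,\ldots,e)$ ($g$ in the $k$-th slot), where $\mathrm{Hom}^0(\Gamma,G)$ is the connected component of the trivial representation. If $\mathrm{Hom}(\Gamma,\widetilde G)$ is simply connected, then the factor inclusions induce an isomorphism $$\pi_1(G)^r\to\pi_1(\mathrm{Hom}^0(\Gamma,G)),\qquad (a_1,\ldots,a_r)\mapsto \prod_k(\iota_k)_*(a_k),$$ (basepoints at the identity / trivial representation); in particular, the images of the $(\iota_k)_*$ generate $\pi_1(\mathrm{Hom}^0(\Gamma,G))$.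
   Context: A finitely presented group $\Gamma$ is exponent-canceling if it admits a finite presentation in which the Abelianization of each relation is trivial. *)

theory Defs
  imports "HOL-Analysis.Analysis" "HOL-Algebra.Product_Groups"
begin

definition topological_group :: "'a topology \<Rightarrow> 'a monoid \<Rightarrow> bool" where
  "topological_group X G \<longleftrightarrow>
     group G \<and> carrier G = topspace X \<and>
     continuous_map (prod_topology X X) X (\<lambda>(x, y). x \<otimes>\<^bsub>G\<^esub> y) \<and>
     continuous_map X X (\<lambda>x. inv\<^bsub>G\<^esub> x)"

definition locally_euclidean :: "'a topology \<Rightarrow> nat \<Rightarrow> bool" where
  "locally_euclidean X n \<longleftrightarrow>
     (\<forall>x\<in>topspace X. \<exists>U. openin X U \<and> x \<in> U \<and>
        subtopology X U homeomorphic_space Euclidean_space n)"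

text \<open>A Lie group, up to its (unique) smooth structure: a topological group whose
  underlying space is a topological manifold (Hausdorff, second countable, locally
  Euclidean).  By Gleason--Montgomery--Zippin these are exactly the Lie groups.\<close>
definition lie_group :: "'a topology \<Rightarrow> 'a monoid \<Rightarrow> bool" where
  "lie_group X G \<longleftrightarrow>
     topological_group X G \<and> Hausdorff_space X \<and> second_countable X \<and>
     (\<exists>n. locally_euclidean X n)"

definition loops :: "'a topology \<Rightarrow> 'a \<Rightarrow> (real \<Rightarrow> 'a) set" where
  "loops X x = {g. pathin X g \<and> g 0 = x \<and> g 1 = x}"

definition loop_homotopic :: "'a topology \<Rightarrow> 'a \<Rightarrow> (real \<Rightarrow> 'a) \<Rightarrow> (real \<Rightarrow> 'a) \<Rightarrow> bool" where
  "loop_homotopic X x f g \<longleftrightarrow>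
     f \<in> loops X x \<and> g \<in> loops X x \<and>
     homotopic_with (\<lambda>h. h 0 = x \<and> h 1 = x) (top_of_set {0..1}) X f g"

definition loop_class :: "'a topology \<Rightarrow> 'a \<Rightarrow> (real \<Rightarrow> 'a) \<Rightarrow> (real \<Rightarrow> 'a) set" where
  "loop_class X x f = {g. loop_homotopic X x f g}"

definition path_join :: "(real \<Rightarrow> 'a) \<Rightarrow> (real \<Rightarrow> 'a) \<Rightarrow> real \<Rightarrow> 'a" where
  "path_join f g = (\<lambda>t. if t \<le> 1/2 then f (2 * t) else g (2 * t - 1))"

definition fundamental_group :: "'a topology \<Rightarrow> 'a \<Rightarrow> (real \<Rightarrow> 'a) set monoid" where
  "fundamental_group X x =
     \<lparr>carrier = loop_class X x ` loops X x,
      monoid.mult = (\<lambda>A B. {h. \<exists>a\<in>A. \<exists>b\<in>B. loop_homotopic X x (path_join a b) h}),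
      one = loop_class X x (\<lambda>t. x)\<rparr>"

definition induced_pi1 :: "'b topology \<Rightarrow> 'b \<Rightarrow> ('a \<Rightarrow> 'b) \<Rightarrow> (real \<Rightarrow> 'a) set \<Rightarrow> (real \<Rightarrow> 'b) set" where
  "induced_pi1 Y y f A = {h. \<exists>a\<in>A. loop_homotopic Y y (f \<circ> a) h}"

definition simply_connected_space :: "'a topology \<Rightarrow> bool" where
  "simply_connected_space X \<longleftrightarrow>
     path_connected_space X \<and>
     (\<forall>x\<in>topspace X. \<forall>g\<in>loops X x. loop_homotopic X x g (\<lambda>t. x))"

definition covering_map :: "'a topology \<Rightarrow> 'b topology \<Rightarrow> ('a \<Rightarrow> 'b) \<Rightarrow> bool" where
  "covering_map E B p \<longleftrightarrow>
     continuous_map E B p \<and> p ` topspace E = topspace B \<and>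
     (\<forall>x\<in>topspace B. \<exists>T. openin B T \<and> x \<in> T \<and>
        (\<exists>V. \<Union>V = {e \<in> topspace E. p e \<in> T} \<and> (\<forall>U\<in>V. openin E U) \<and>
             pairwise disjnt V \<and>
             (\<forall>U\<in>V. homeomorphic_map (subtopology E U) (subtopology B T) p)))"

text \<open>A word in the generators \<open>\<gamma>\<^sub>1,\<dots>,\<gamma>\<^sub>r\<close>: a list of letters \<open>(i, b)\<close> standing for
  \<open>\<gamma>\<^sub>i\<close> if \<open>b = False\<close> and \<open>\<gamma>\<^sub>i\<^sup>-\<^sup>1\<close> if \<open>b = True\<close>.\<close>
type_synonym word = "(nat \<times> bool) list"

fun word_eval :: "'a monoid \<Rightarrow> (nat \<Rightarrow> 'a) \<Rightarrow> word \<Rightarrow> 'a" where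
  "word_eval G \<rho> [] = \<one>\<^bsub>G\<^esub>"
| "word_eval G \<rho> ((i, b) # w) =
     (if b then inv\<^bsub>G\<^esub> (\<rho> i) else \<rho> i) \<otimes>\<^bsub>G\<^esub> word_eval G \<rho> w"

text \<open>Abelianization of a word is trivial: each generator has exponent sum zero.\<close>
definition exponent_canceling_word :: "word \<Rightarrow> bool" where
  "exponent_canceling_word w \<longleftrightarrow>
     (\<forall>i. length (filter (\<lambda>l. l = (i, False)) w) = length (filter (\<lambda>l. l = (i, True)) w))"

definition hom_set :: "'a monoid \<Rightarrow> nat \<Rightarrow> word set \<Rightarrow> (nat \<Rightarrow> 'a) set" where
  "hom_set H r R = {\<rho> \<in> (\<Pi>\<^sub>E k\<in>{1..r}. carrier H). \<forall>w\<in>R. word_eval H \<rho> w = \<one>\<^bsub>H\<^esub>}"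

definition hom_space :: "'a topology \<Rightarrow> 'a monoid \<Rightarrow> nat \<Rightarrow> word set \<Rightarrow> (nat \<Rightarrow> 'a) topology" where
  "hom_space X H r R = subtopology (product_topology (\<lambda>k. X) {1..r}) (hom_set H r R)"

definition trivial_rep :: "'a monoid \<Rightarrow> nat \<Rightarrow> nat \<Rightarrow> 'a" where
  "trivial_rep H r = (\<lambda>k\<in>{1..r}. \<one>\<^bsub>H\<^esub>)"

definition hom0_space :: "'a topology \<Rightarrow> 'a monoid \<Rightarrow> nat \<Rightarrow> word set \<Rightarrow> (nat \<Rightarrow> 'a) topology" where
  "hom0_space X H r R =
     subtopology (hom_space X H r R) (connected_component_of_set (hom_space X H r R) (trivial_rep H r))"

definition factor_incl :: "'a monoid \<Rightarrow> nat \<Rightarrow> nat \<Rightarrow> 'a \<Rightarrow> nat \<Rightarrow> 'a" where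
  "factor_incl H r k g = (\<lambda>j\<in>{1..r}. if j = k then g else \<one>\<^bsub>H\<^esub>)"

fun ordprod :: "('a, 'b) monoid_scheme \<Rightarrow> (nat \<Rightarrow> 'a) \<Rightarrow> nat \<Rightarrow> 'a" where
  "ordprod M f 0 = \<one>\<^bsub>M\<^esub>"
| "ordprod M f (Suc n) = ordprod M f n \<otimes>\<^bsub>M\<^esub> f (Suc n)"

end

theory Submission
  imports Defs
begin


abbreviation I01 :: "real topology" where "I01 \<equiv> top_of_set {0..1}"

lemma cm_reparam:
  assumes "continuous_map (top_of_set T) Y f" "continuous_on S \<phi>" "\<phi> \<in> S \<rightarrow> T"
  shows "continuous_map (top_of_set S) Y (\<lambda>x. f (\<phi> x))"
proof -
  have "continuous_map (top_of_set S) (top_of_set T) \<phi>" using assms by simp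
  from continuous_map_compose[OF this assms(1)] show ?thesis by (simp add: o_def)
qed

lemma pathin_reparam:
  assumes "pathin X g" "continuous_on S \<phi>" "\<phi> \<in> S \<rightarrow> {0..1}"
  shows "continuous_map (top_of_set S) X (\<lambda>x. g (\<phi> x))"
  using assms cm_reparam unfolding pathin_def by blast

lemma pathin_join:
  assumes a: "pathin X a" and b: "pathin X b" and ab: "a 1 = b 0"
  shows "pathin X (path_join a b)"
  unfolding pathin_def path_join_def
proof (rule continuous_map_cases_le)
  show "continuous_map (subtopology (top_of_set {0..1}) {x \<in> topspace (top_of_set {0..1}). x \<le> 1 / 2}) X (\<lambda>t. a (2 * t))"
    by (simp add: subtopology_subtopology, rule pathin_reparam[OF a])
       (intro continuous_intros, auto)
  show "continuous_map (subtopology (top_of_set {0..1}) {x \<in> topspace (top_of_set {0..1}). 1 / 2 \<le> x}) X (\<lambda>t. b (2 * t - 1))"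
    by (simp add: subtopology_subtopology, rule pathin_reparam[OF b])
       (intro continuous_intros, auto)
next
  fix t :: real assume "t \<in> topspace (top_of_set {0..1})" "t = 1/2"
  then have "2 * t = 1" "2 * t - 1 = 0" by auto
  then show "a (2 * t) = b (2 * t - 1)" using ab by (simp only:)
qed (simp_all add: continuous_on_id continuous_on_const)

lemma homotopicI:
  fixes h :: "real \<times> real \<Rightarrow> 'a"
  assumes h: "continuous_map (top_of_set ({0..1} \<times> {0..1})) Y h"
    and h0: "\<And>t. t \<in> {0..1} \<Longrightarrow> h (0, t) = f t"
    and h1: "\<And>t. t \<in> {0..1} \<Longrightarrow> h (1, t) = g t"
    and P: "\<And>s. s \<in> {0..1} \<Longrightarrow> P (\<lambda>t. h (s, t))" and Pf: "P f" and Pg: "P g"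
  shows "homotopic_with P I01 Y f g"
proof -
  have "homotopic_with P I01 Y (\<lambda>t. h (0, t)) (\<lambda>t. h (1, t))"
    unfolding homotopic_with_def using h P by (intro exI[of _ h]) auto
  moreover have "homotopic_with P I01 Y f (\<lambda>t. h (0, t))"
  proof (rule homotopic_with_equal)
    have "continuous_map I01 Y (\<lambda>t. h (0, t))"
      by (rule cm_reparam[OF h]) (auto intro!: continuous_on_Pair continuous_on_const continuous_on_id)
    then show "continuous_map I01 Y f"
      by (rule continuous_map_eq) (simp add: h0)
    show "P (\<lambda>t. h (0, t))" by (rule P) simp
    show "f x = h (0, x)" if "x \<in> topspace I01" for x using that by (simp add: h0)
  qed (rule Pf)
  moreover have "homotopic_with P I01 Y (\<lambda>t. h (1, t)) g"
  proof (rule homotopic_with_equal)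
    show "continuous_map I01 Y (\<lambda>t. h (1, t))"
      by (rule cm_reparam[OF h]) (auto intro!: continuous_on_Pair continuous_on_const continuous_on_id)
    show "P (\<lambda>t. h (1, t))" by (rule P) simp
    show "h (1, x) = g x" if "x \<in> topspace I01" for x using that by (simp add: h1)
  qed (rule Pg)
  ultimately show ?thesis by (meson homotopic_with_trans)
qed

lemma homotopicD:
  assumes "homotopic_with P I01 Y f g"
  obtains h :: "real \<times> real \<Rightarrow> _" where "continuous_map (top_of_set ({0..1} \<times> {0..1})) Y h"
    "\<And>t. h (0, t) = f t" "\<And>t. h (1, t) = g t" "\<And>s. s \<in> {0..1} \<Longrightarrow> P (\<lambda>t. h (s, t))"
proof -
  obtain h :: "real \<times> real \<Rightarrow> _" where "continuous_map (prod_topology I01 I01) Y h" "\<forall>x. h(0,x) = f x" "\<forall>x. h(1,x) = g x"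
     "\<forall>t\<in>{0..1}. P(\<lambda>x. h(t,x))"
    using assms unfolding homotopic_with_def by blast
  then show thesis by (intro that[of h]) auto
qed




lemma loopsD: "g \<in> loops X x \<Longrightarrow> pathin X g \<and> g 0 = x \<and> g 1 = x"
  by (simp add: loops_def)

lemma lh_refl: "g \<in> loops X x \<Longrightarrow> loop_homotopic X x g g"
  unfolding loop_homotopic_def loops_def pathin_def by auto

lemma lh_sym: "loop_homotopic X x f g \<Longrightarrow> loop_homotopic X x g f"
  unfolding loop_homotopic_def using homotopic_with_sym by blast

lemma lh_trans: "loop_homotopic X x f g \<Longrightarrow> loop_homotopic X x g h \<Longrightarrow> loop_homotopic X x f h"
  unfolding loop_homotopic_def using homotopic_with_trans by blast

lemma lh_loops: "loop_homotopic X x f g \<Longrightarrow> f \<in> loops X x \<and> g \<in> loops X x"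
  unfolding loop_homotopic_def by blast

lemma loop_class_eq:
  assumes "f \<in> loops X x" "g \<in> loops X x"
  shows "loop_class X x f = loop_class X x g \<longleftrightarrow> loop_homotopic X x f g"
proof
  assume "loop_class X x f = loop_class X x g"
  moreover have "g \<in> loop_class X x g" using assms by (simp add: loop_class_def lh_refl)
  ultimately have "g \<in> loop_class X x f" by simp
  then show "loop_homotopic X x f g" by (simp add: loop_class_def)
next
  assume "loop_homotopic X x f g"
  then show "loop_class X x f = loop_class X x g"
    unfolding loop_class_def by (blast intro: lh_trans lh_sym)
qed

lemma join_loops:
  assumes "f \<in> loops X x" "g \<in> loops X x" shows "path_join f g \<in> loops X x"
proof -
  have "pathin X (path_join f g)" using assms by (intro pathin_join) (auto simp: loops_def)
  then show ?thesis using assms by (simp add: loops_def path_join_def)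
qed

lemma lh_join:
  assumes "loop_homotopic X x a f" "loop_homotopic X x b g"
  shows "loop_homotopic X x (path_join a b) (path_join f g)"
proof -
  have L: "a \<in> loops X x" "f \<in> loops X x" "b \<in> loops X x" "g \<in> loops X x"
    using lh_loops[OF assms(1)] lh_loops[OF assms(2)] by auto
  have hw1: "homotopic_with (\<lambda>h. h 0 = x \<and> h 1 = x) I01 X a f" using assms(1) by (simp add: loop_homotopic_def)
  have hw2: "homotopic_with (\<lambda>h. h 0 = x \<and> h 1 = x) I01 X b g" using assms(2) by (simp add: loop_homotopic_def)
  obtain h1 :: "real \<times> real \<Rightarrow> _" where h10: "continuous_map (prod_topology I01 I01) X h1"
    "\<forall>t. h1 (0, t) = a t" "\<forall>t. h1 (1, t) = f t" "\<forall>s\<in>{0..1}. h1 (s, 0) = x \<and> h1 (s, 1) = x"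
    using hw1 unfolding homotopic_with_def by auto
  have h1: "continuous_map (top_of_set ({0..1} \<times> {0..1})) X h1"
    "\<And>t. h1 (0, t) = a t" "\<And>t. h1 (1, t) = f t" "\<And>s. s \<in> {0..1} \<Longrightarrow> h1 (s, 0) = x \<and> h1 (s, 1) = x"
    using h10 by auto
  obtain h2 :: "real \<times> real \<Rightarrow> _" where h20: "continuous_map (prod_topology I01 I01) X h2"
    "\<forall>t. h2 (0, t) = b t" "\<forall>t. h2 (1, t) = g t" "\<forall>s\<in>{0..1}. h2 (s, 0) = x \<and> h2 (s, 1) = x"
    using hw2 unfolding homotopic_with_def by auto
  have h2: "continuous_map (top_of_set ({0..1} \<times> {0..1})) X h2"
    "\<And>t. h2 (0, t) = b t" "\<And>t. h2 (1, t) = g t" "\<And>s. s \<in> {0..1} \<Longrightarrow> h2 (s, 0) = x \<and> h2 (s, 1) = x"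
    using h20 by auto
  define J where "J = (\<lambda>z::real\<times>real. if snd z \<le> 1/2 then h1 (fst z, 2 * snd z) else h2 (fst z, 2 * snd z - 1))"
  have cJ: "continuous_map (top_of_set ({0..1} \<times> {0..1})) X J"
    unfolding J_def
  proof (rule continuous_map_cases_le)
    show "continuous_map (subtopology (top_of_set ({0..1} \<times> {0..1})) {z \<in> topspace (top_of_set ({0..1::real} \<times> {0..1::real})). snd z \<le> 1 / 2}) X
       (\<lambda>z. h1 (fst z, 2 * snd z))"
      by (simp add: subtopology_subtopology, rule cm_reparam[OF h1(1)])
         (intro continuous_intros, auto)
    show "continuous_map (subtopology (top_of_set ({0..1} \<times> {0..1})) {z \<in> topspace (top_of_set ({0..1::real} \<times> {0..1::real})). 1/2 \<le> snd z}) X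
       (\<lambda>z. h2 (fst z, 2 * snd z - 1))"
      by (simp add: subtopology_subtopology, rule cm_reparam[OF h2(1)])
         (intro continuous_intros, auto)
  next
    fix z :: "real \<times> real" assume "z \<in> topspace (top_of_set ({0..1} \<times> {0..1}))" "snd z = 1/2"
    then have "fst z \<in> {0..1}" "2 * snd z = 1" "2 * snd z - 1 = 0" by auto
    then show "h1 (fst z, 2 * snd z) = h2 (fst z, 2 * snd z - 1)"
      using h1(4) h2(4) by (simp only:)
  qed (simp_all add: continuous_map_from_subtopology continuous_map_snd continuous_on_const continuous_on_snd continuous_on_id)
  show ?thesis
    unfolding loop_homotopic_def
  proof (intro conjI)
    show "path_join a b \<in> loops X x" by (rule join_loops) (rule L)+
    show "path_join f g \<in> loops X x" by (rule join_loops) (rule L)+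
    show "homotopic_with (\<lambda>h. h 0 = x \<and> h 1 = x) I01 X (path_join a b) (path_join f g)"
    proof (rule homotopicI[OF cJ])
      fix s :: real assume "s \<in> {0..1}"
      then show "J (s, 0) = x \<and> J (s, 1) = x" using h1(4)[of s] h2(4)[of s] by (simp add: J_def)
    next
      fix t :: real show "J (0, t) = path_join a b t" by (simp add: J_def path_join_def h1(2) h2(2))
    next
      fix t :: real show "J (1, t) = path_join f g t" by (simp add: J_def path_join_def h1(3) h2(3))
    next
      show "path_join a b 0 = x \<and> path_join a b 1 = x" using lh_loops[OF assms(1)] lh_loops[OF assms(2)]
        by (simp add: path_join_def loops_def)
    next
      show "path_join f g 0 = x \<and> path_join f g 1 = x" using lh_loops[OF assms(1)] lh_loops[OF assms(2)]
        by (simp add: path_join_def loops_def)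
    qed
  qed
qed

lemma mult_class:
  assumes "f \<in> loops X x" "g \<in> loops X x"
  shows "loop_class X x f \<otimes>\<^bsub>fundamental_group X x\<^esub> loop_class X x g = loop_class X x (path_join f g)"
proof -
  have "{h. \<exists>a\<in>loop_class X x f. \<exists>b\<in>loop_class X x g. loop_homotopic X x (path_join a b) h} = loop_class X x (path_join f g)"
  proof safe
    fix h a b assume "a \<in> loop_class X x f" "b \<in> loop_class X x g" "loop_homotopic X x (path_join a b) h"
    then show "h \<in> loop_class X x (path_join f g)"
      unfolding loop_class_def by (blast intro: lh_trans lh_join lh_sym)
  next
    fix h assume "h \<in> loop_class X x (path_join f g)"
    moreover have "f \<in> loop_class X x f" "g \<in> loop_class X x g" using assms by (auto simp: loop_class_def lh_refl)
    ultimately show "\<exists>a\<in>loop_class X x f. \<exists>b\<in>loop_class X x g. loop_homotopic X x (path_join a b) h"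
      by (auto simp: loop_class_def)
  qed
  then show ?thesis by (simp add: fundamental_group_def)
qed

lemma class_in_carrier: "f \<in> loops X x \<Longrightarrow> loop_class X x f \<in> carrier (fundamental_group X x)"
  by (simp add: fundamental_group_def)

lemma one_class: "\<one>\<^bsub>fundamental_group X x\<^esub> = loop_class X x (\<lambda>t. x)"
  by (simp add: fundamental_group_def)

lemma const_loop: "x \<in> topspace X \<Longrightarrow> (\<lambda>t. x) \<in> loops X x"
  by (simp add: loops_def)

lemma lh_reparam:
  assumes g: "g \<in> loops X x" and \<phi>: "continuous_on {0..1} \<phi>" "\<phi> \<in> {0..1} \<rightarrow> {0..1}" "\<phi> 0 = 0" "\<phi> 1 = 1"
    and f: "\<And>t. t \<in> {0..1} \<Longrightarrow> f t = g (\<phi> t)" "f 0 = x" "f 1 = x"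
  shows "loop_homotopic X x f g"
proof -
  have pg: "pathin X g" "g 0 = x" "g 1 = x" using g by (auto simp: loops_def)
  have cf: "continuous_map I01 X (\<lambda>t. g (\<phi> t))" by (rule pathin_reparam[OF pg(1) \<phi>(1,2)])
  then have "pathin X f" unfolding pathin_def by (rule continuous_map_eq) (simp add: f)
  then have fl: "f \<in> loops X x" using f by (simp add: loops_def)
  define h where "h = (\<lambda>z::real\<times>real. g ((1 - fst z) * \<phi> (snd z) + fst z * snd z))"
  have conv: "(1 - s) * a + s * b \<in> {0..1}" if "s \<in> {0..1}" "a \<in> {0..1}" "b \<in> {0..1}" for s a b :: real
  proof -
    have "0 \<le> (1 - s) * a + s * b" using that by auto
    moreover have "(1 - s) * a + s * b \<le> (1 - s) * 1 + s * 1"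
      using that by (intro add_mono mult_left_mono) auto
    ultimately show ?thesis by simp
  qed
  have ch: "continuous_map (top_of_set ({0..1} \<times> {0..1})) X h"
    unfolding h_def
  proof (rule pathin_reparam[OF pg(1)])
    show "continuous_on ({0..1} \<times> {0..1}) (\<lambda>z::real\<times>real. (1 - fst z) * \<phi> (snd z) + fst z * snd z)"
      by (intro continuous_intros continuous_on_compose2[OF \<phi>(1)]) auto
    show "(\<lambda>z::real\<times>real. (1 - fst z) * \<phi> (snd z) + fst z * snd z) \<in> {0..1} \<times> {0..1} \<rightarrow> {0..1}"
    proof
      fix z :: "real \<times> real" assume z: "z \<in> {0..1} \<times> {0..1}"
      then have "\<phi> (snd z) \<in> {0..1}" using \<phi>(2) by auto
      then show "(1 - fst z) * \<phi> (snd z) + fst z * snd z \<in> {0..1}"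
        using conv[of "fst z" "\<phi> (snd z)" "snd z"] z by auto
    qed
  qed
  show ?thesis unfolding loop_homotopic_def
  proof (intro conjI fl g)
    show "homotopic_with (\<lambda>h. h 0 = x \<and> h 1 = x) I01 X f g"
      by (rule homotopicI[OF ch]) (auto simp: h_def f pg \<phi>)
  qed
qed

lemma lh_join_const_right:
  assumes g: "g \<in> loops X x"
  shows "loop_homotopic X x (path_join g (\<lambda>t. x)) g"
proof (rule lh_reparam[OF g, of "\<lambda>t. min 1 (2 * t)"])
  show "continuous_on {0..1} (\<lambda>t::real. min 1 (2 * t))" by (intro continuous_intros)
  fix t :: real assume "t \<in> {0..1}"
  show "path_join g (\<lambda>t. x) t = g (min 1 (2 * t))"
  proof (cases "t \<le> 1/2")
    case True then have "min 1 (2*t) = 2*t" by simp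
    then show ?thesis using True by (simp add: path_join_def)
  next
    case False then have "min 1 (2*t) = 1" by simp
    then show ?thesis using False g by (simp add: path_join_def loops_def)
  qed
qed (use g in \<open>auto simp: path_join_def loops_def\<close>)

lemma lh_join_const_left:
  assumes g: "g \<in> loops X x"
  shows "loop_homotopic X x (path_join (\<lambda>t. x) g) g"
proof -
  have g0: "g 0 = x" "g 1 = x" using g by (simp_all add: loops_def)
  show ?thesis
proof (rule lh_reparam[OF g, of "\<lambda>t. max 0 (2 * t - 1)"])
  show "continuous_on {0..1} (\<lambda>t::real. max 0 (2 * t - 1))" by (intro continuous_intros)
  fix t :: real assume "t \<in> {0..1}"
  show "path_join (\<lambda>t. x) g t = g (max 0 (2 * t - 1))"
  proof (cases "t \<le> 1/2")
    case True then have "max 0 (2*t - 1) = 0" by simp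
    then show ?thesis using True g0 by (simp add: path_join_def)
  next
    case False then have "max 0 (2*t-1) = 2*t-1" by simp
    then show ?thesis using False by (simp add: path_join_def)
  qed
qed (use g0 in \<open>auto simp: path_join_def\<close>)
qed

lemma lh_compose:
  assumes "loop_homotopic X x f g" "continuous_map X Y \<phi>"
  shows "loop_homotopic Y (\<phi> x) (\<phi> \<circ> f) (\<phi> \<circ> g)"
  using assms unfolding loop_homotopic_def loops_def
  by (auto intro: homotopic_with_compose_continuous_map_left pathin_compose)

lemma loops_compose: "f \<in> loops X x \<Longrightarrow> continuous_map X Y \<phi> \<Longrightarrow> \<phi> \<circ> f \<in> loops Y (\<phi> x)"
  unfolding loops_def by (auto intro: pathin_compose)

lemma join_compose: "\<phi> \<circ> path_join f g = path_join (\<phi> \<circ> f) (\<phi> \<circ> g)"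
  by (auto simp: path_join_def)




lemma coveringD:
  assumes "covering_map E B p" "x \<in> topspace B"
  shows "\<exists>T. openin B T \<and> x \<in> T \<and>
        (\<exists>V. \<Union>V = {e \<in> topspace E. p e \<in> T} \<and> (\<forall>U\<in>V. openin E U) \<and>
             pairwise disjnt V \<and>
             (\<forall>U\<in>V. homeomorphic_map (subtopology E U) (subtopology B T) p))"
proof -
  have H: "\<forall>x\<in>topspace B. \<exists>T. openin B T \<and> x \<in> T \<and>
        (\<exists>V. \<Union>V = {e \<in> topspace E. p e \<in> T} \<and> (\<forall>U\<in>V. openin E U) \<and>
             pairwise disjnt V \<and>
             (\<forall>U\<in>V. homeomorphic_map (subtopology E U) (subtopology B T) p))"
    using assms(1) unfolding covering_map_def by (elim conjE)
  show ?thesis by (rule bspec[OF H assms(2)])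
qed

lemma coveringC: "covering_map E B p \<Longrightarrow> continuous_map E B p"
  unfolding covering_map_def by (elim conjE)

lemma cov_local_inj:
  assumes p: "covering_map E B p" and e: "e \<in> topspace E"
  obtains U where "openin E U" "e \<in> U" "inj_on p U"
proof -
  have pe: "p e \<in> topspace B" using coveringC[OF p] e by (simp add: continuous_map_def Pi_iff)
  obtain T where "openin B T" "p e \<in> T" "\<exists>V. \<Union>V = {x \<in> topspace E. p x \<in> T} \<and>
    (\<forall>U\<in>V. openin E U) \<and> pairwise disjnt V \<and> (\<forall>U\<in>V. homeomorphic_map (subtopology E U) (subtopology B T) p)"
    using coveringD[OF p pe] by (elim exE conjE) (rule that, assumption+, blast)
  then obtain V where T: "openin B T" "p e \<in> T" "\<Union>V = {x \<in> topspace E. p x \<in> T}"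
    "\<forall>U\<in>V. openin E U" "\<forall>U\<in>V. homeomorphic_map (subtopology E U) (subtopology B T) p"
    by (elim exE conjE) (rule that, assumption+)
  then have "e \<in> \<Union>V" using e by simp
  then obtain U where U: "U \<in> V" "e \<in> U" by (rule UnionE)
  have "openin E U" by (rule bspec[OF T(4) U(1)])
  moreover have "inj_on p (topspace (subtopology E U))"
    using T(5) U(1) homeomorphic_imp_injective_map by blast
  then have "inj_on p U" using openin_subset[OF \<open>openin E U\<close>] by (simp add: Int_absorb1)
  ultimately show thesis using that U by blast
qed

lemma cov_const_lift:
  assumes p: "covering_map E B p" and Z: "connected_space Z" and f: "continuous_map Z E f"
    and c: "\<And>z. z \<in> topspace Z \<Longrightarrow> p (f z) = c"
    and z0: "z0 \<in> topspace Z" and z: "z \<in> topspace Z"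
  shows "f z = f z0"
proof -
  have loc: "\<exists>W. openin Z W \<and> z \<in> W \<and> (\<forall>w\<in>W. f w = f z)" if "z \<in> topspace Z" for z
  proof -
    have "f z \<in> topspace E" using f that by (auto simp: continuous_map_def)
    then obtain U where U: "openin E U" "f z \<in> U" "inj_on p U" by (rule cov_local_inj[OF p])
    define W where "W = {w \<in> topspace Z. f w \<in> U}"
    have "openin Z W" unfolding W_def using f U(1) by (simp add: continuous_map_def)
    moreover have "z \<in> W" using that U by (simp add: W_def)
    moreover have "\<forall>w\<in>W. f w = f z"
    proof
      fix w assume "w \<in> W"
      then have "f w \<in> U" "w \<in> topspace Z" by (auto simp: W_def)
      moreover have "p (f w) = p (f z)" using c \<open>w \<in> topspace Z\<close> that by simp
      ultimately show "f w = f z" using U(2,3) by (meson inj_onD)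
    qed
    ultimately show ?thesis by (intro exI[of _ W] conjI)
  qed
  define A where "A = {w \<in> topspace Z. f w = f z0}"
  have oA: "openin Z A"
  proof (subst openin_subopen, intro ballI)
    fix w assume "w \<in> A"
    then have w: "w \<in> topspace Z" "f w = f z0" by (auto simp: A_def)
    obtain W where W: "openin Z W" "w \<in> W" "\<forall>v\<in>W. f v = f w" using loc[OF w(1)] by (elim exE conjE)
    have "W \<subseteq> A" using openin_subset[OF W(1)] W(3) w(2) by (auto simp: A_def)
    then show "\<exists>T. openin Z T \<and> w \<in> T \<and> T \<subseteq> A" using W(1,2) by (intro exI[of _ W] conjI)
  qed
  have oA': "openin Z (topspace Z - A)"
  proof (subst openin_subopen, intro ballI)
    fix w assume w: "w \<in> topspace Z - A"
    then have w1: "w \<in> topspace Z" "f w \<noteq> f z0" by (auto simp: A_def)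
    obtain W where W: "openin Z W" "w \<in> W" "\<forall>v\<in>W. f v = f w" using loc[OF w1(1)] by (elim exE conjE)
    have "W \<subseteq> topspace Z - A" using openin_subset[OF W(1)] W(3) w1(2) by (auto simp: A_def)
    then show "\<exists>T. openin Z T \<and> w \<in> T \<and> T \<subseteq> topspace Z - A" using W(1,2) by (intro exI[of _ W] conjI)
  qed
  have "closedin Z A" using oA' by (simp add: closedin_def A_def)
  then have "A = {} \<or> A = topspace Z" using Z oA by (simp add: connected_space_clopen_in)
  moreover have "z0 \<in> A" using z0 by (simp add: A_def)
  ultimately have "z \<in> A" using z by auto
  then show ?thesis by (simp add: A_def)
qed

definition evcov :: "'a topology \<Rightarrow> 'b topology \<Rightarrow> ('a \<Rightarrow> 'b) \<Rightarrow> 'b set \<Rightarrow> bool" where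
  "evcov E B p T \<longleftrightarrow> openin B T \<and> (\<exists>V. \<Union>V = {e \<in> topspace E. p e \<in> T} \<and> (\<forall>U\<in>V. openin E U) \<and>
             (\<forall>U\<in>V. homeomorphic_map (subtopology E U) (subtopology B T) p))"

lemma evcov_local_section:
  assumes "evcov E B p T" "e \<in> topspace E" "p e \<in> T"
  obtains q where "continuous_map (subtopology B T) E q" "q (p e) = e" "\<And>y. y \<in> T \<Longrightarrow> p (q y) = y"
proof -
  obtain V where V: "\<Union>V = {e \<in> topspace E. p e \<in> T}" "\<forall>U\<in>V. openin E U"
     "\<forall>U\<in>V. homeomorphic_map (subtopology E U) (subtopology B T) p" and oT: "openin B T"
    using assms(1) unfolding evcov_def by (elim exE conjE) (rule that, assumption+)
  have "e \<in> \<Union>V" using assms(2,3) V(1) by simp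
  then obtain U where U: "U \<in> V" "e \<in> U" by (rule UnionE)
  obtain q where q: "homeomorphic_maps (subtopology E U) (subtopology B T) p q"
    using bspec[OF V(3) U(1)] homeomorphic_map_maps by blast
  have UE: "U \<subseteq> topspace E" using bspec[OF V(2) U(1)] openin_subset by blast
  have TB: "T \<subseteq> topspace B" using oT openin_subset by blast
  have cq: "continuous_map (subtopology B T) (subtopology E U) q" using q by (simp add: homeomorphic_maps_def)
  show thesis
  proof (rule that)
    show "continuous_map (subtopology B T) E q" using cq continuous_map_in_subtopology by blast
    show "q (p e) = e" using q U UE by (auto simp: homeomorphic_maps_def)
    show "p (q y) = y" if "y \<in> T" for y using q that TB by (auto simp: homeomorphic_maps_def)
  qed
qed

lemma covering_evcov:
  assumes "covering_map E B p" "x \<in> topspace B"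
  obtains T where "evcov E B p T" "x \<in> T"
proof -
  obtain T where "openin B T" "x \<in> T" "\<exists>V. \<Union>V = {x \<in> topspace E. p x \<in> T} \<and>
    (\<forall>U\<in>V. openin E U) \<and> pairwise disjnt V \<and> (\<forall>U\<in>V. homeomorphic_map (subtopology E U) (subtopology B T) p)"
    using coveringD[OF assms] by (elim exE conjE) (rule that, assumption+, blast)
  then have "evcov E B p T" unfolding evcov_def by (elim exE conjE) (intro conjI exI, assumption+)
  then show thesis using that \<open>x \<in> T\<close> by blast
qed

lemma path_lift:
  assumes p: "covering_map E B p" and g: "pathin B g" and e: "e \<in> topspace E" and ge: "p e = g 0"
  shows "\<exists>h. pathin E h \<and> h 0 = e \<and> (\<forall>t\<in>{0..1}. p (h t) = g t)"
proof -
  have gB: "g t \<in> topspace B" if "t \<in> {0..1}" for t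
    using g that by (auto simp: pathin_def continuous_map_def)
  define \<G> where "\<G> = {Q. open Q \<and> (\<exists>T. evcov E B p T \<and> (\<forall>s\<in>{0..1} \<inter> Q. g s \<in> T))}"
  have cover: "{0..1} \<subseteq> \<Union>\<G>"
  proof
    fix t :: real assume t: "t \<in> {0..1}"
    obtain T where T: "evcov E B p T" "g t \<in> T" using covering_evcov[OF p gB[OF t]] by blast
    have oT: "openin B T" using T(1) unfolding evcov_def by (elim conjE)
    have "openin I01 {s \<in> topspace I01. g s \<in> T}"
      using g oT unfolding pathin_def continuous_map_def by blast
    then obtain Q where Q: "open Q" "{s \<in> {0..1}. g s \<in> T} = {0..1} \<inter> Q"
      by (auto simp: openin_open)
    have "Q \<in> \<G>" unfolding \<G>_def using Q T(1) by blast
    moreover have "t \<in> Q" using Q(2) t T(2) by blast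
    ultimately show "t \<in> \<Union>\<G>" by blast
  qed
  have opG: "\<And>G. G \<in> \<G> \<Longrightarrow> open G" by (simp add: \<G>_def)
  obtain \<epsilon> :: real where \<epsilon>: "0 < \<epsilon>" "\<And>x. x \<in> {0..1} \<Longrightarrow> \<exists>G\<in>\<G>. ball x \<epsilon> \<subseteq> G"
    using Heine_Borel_lemma[OF compact_Icc cover opG] by blast
  obtain N :: nat where N: "1 / \<epsilon> < N" using reals_Archimedean2 by blast
  have Npos: "0 < N" using N \<epsilon> by (metis of_nat_0_less_iff divide_pos_pos less_trans zero_less_one)
  have Nsmall: "1 / real N < \<epsilon>" using N \<epsilon> Npos by (simp add: field_simps)
  have step_ec: "\<exists>T. evcov E B p T \<and> (\<forall>s\<in>{real m / N..real (Suc m) / N}. g s \<in> T)" if "Suc m \<le> N" for m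
  proof -
    have m01: "real m / N \<in> {0..1}" using that Npos by (auto simp: field_simps)
    obtain G where G: "G \<in> \<G>" "ball (real m / N) \<epsilon> \<subseteq> G" using \<epsilon>(2)[OF m01] by blast
    obtain T where T: "evcov E B p T" "\<forall>s\<in>{0..1} \<inter> G. g s \<in> T" using G(1) unfolding \<G>_def by blast
    have "s \<in> {0..1} \<inter> G" if "s \<in> {real m / N..real (Suc m) / N}" for s
    proof -
      have "0 \<le> s" using that Npos by (auto intro: order_trans[rotated])
      moreover have "s \<le> 1"
      proof -
        have "real (Suc m) \<le> real N" using \<open>Suc m \<le> N\<close> by linarith
        then have "real (Suc m) / N \<le> 1" using Npos by simp
        then show ?thesis using that by simp
      qed
      moreover have "dist (real m / N) s < \<epsilon>"
      proof -
        have "dist (real m / N) s \<le> real (Suc m) / N - real m / N" using that by (auto simp: dist_real_def)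
        also have "\<dots> = 1 / N" using Npos by (simp add: field_simps)
        finally show ?thesis using Nsmall by linarith
      qed
      ultimately show ?thesis using G(2) by auto
    qed
    then show ?thesis using T by blast
  qed
  have "\<exists>h. continuous_map (top_of_set {0..real m / N}) E h \<and> h 0 = e \<and> (\<forall>t\<in>{0..real m / N}. p (h t) = g t)"
    if "m \<le> N" for m
    using that
  proof (induction m)
    case 0
    show ?case using e ge by (intro exI[of _ "\<lambda>_. e"]) auto
  next
    case (Suc m)
    then obtain h where h: "continuous_map (top_of_set {0..real m / N}) E h" "h 0 = e"
      "\<forall>t\<in>{0..real m / N}. p (h t) = g t" by auto
    define a where "a = real m / N"
    define b where "b = real (Suc m) / N"
    have ab: "0 \<le> a" "a \<le> b" "b \<le> 1" using Suc.prems Npos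
      by (auto simp: a_def b_def divide_right_mono field_simps)
    obtain T where T: "evcov E B p T" "\<forall>s\<in>{a..b}. g s \<in> T" using step_ec[OF Suc.prems] a_def b_def by blast
    have ha: "h a \<in> topspace E" using h(1) ab by (auto simp: a_def continuous_map_def)
    have pha: "p (h a) = g a" using h(3) ab by (simp add: a_def)
    have "p (h a) \<in> T" using pha T(2) ab by auto
    then obtain q where q: "continuous_map (subtopology B T) E q" "q (p (h a)) = h a" "\<And>y. y \<in> T \<Longrightarrow> p (q y) = y"
      using evcov_local_section[OF T(1) ha] by blast
    define h' where "h' = (\<lambda>t. if t \<le> a then h t else q (g t))"
    have cg: "continuous_map (top_of_set {a..b}) (subtopology B T) g"
    proof -
      have "continuous_map (top_of_set {a..b}) B g"
        by (rule continuous_map_from_subtopology_mono[OF g[unfolded pathin_def]]) (use ab in auto)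
      then show ?thesis using T(2) by (simp add: continuous_map_in_subtopology)
    qed
    have ch': "continuous_map (top_of_set {0..b}) E h'"
      unfolding h'_def
    proof (rule continuous_map_cases_le)
      have "{0..b} \<inter> {x. x \<in> topspace (top_of_set {0..b}) \<and> x \<le> a} = {0..a}" using ab by auto
      then show "continuous_map (subtopology (top_of_set {0..b}) {x \<in> topspace (top_of_set {0..b}). x \<le> a}) E h"
        using h(1) by (simp add: subtopology_subtopology a_def)
      have "{0..b} \<inter> {x. x \<in> topspace (top_of_set {0..b}) \<and> a \<le> x} = {a..b}" using ab by auto
      then show "continuous_map (subtopology (top_of_set {0..b}) {x \<in> topspace (top_of_set {0..b}). a \<le> x}) E (\<lambda>t. q (g t))"
        using continuous_map_compose[OF cg q(1)] by (simp add: subtopology_subtopology o_def)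
    next
      fix t assume "t \<in> topspace (top_of_set {0..b})" "t = a"
      then show "h t = q (g t)" using q(2) pha by simp
    qed (simp_all add: continuous_on_id continuous_on_const)
    show ?case
    proof (intro exI conjI)
      show "continuous_map (top_of_set {0..real (Suc m) / N}) E h'" using ch' by (simp add: b_def)
      show "h' 0 = e" using h(2) ab by (simp add: h'_def)
      show "\<forall>t\<in>{0..real (Suc m) / N}. p (h' t) = g t"
      proof
        fix t assume t: "t \<in> {0..real (Suc m) / N}"
        show "p (h' t) = g t"
        proof (cases "t \<le> a")
          case True then show ?thesis using h(3) t by (simp add: h'_def a_def)
        next
          case False then have "t \<in> {a..b}" using t by (auto simp: b_def)
          then show ?thesis using False q(3) T(2) by (simp add: h'_def)
        qed
      qed
    qed
  qed
  from this[of N] Npos show ?thesis by (auto simp: pathin_def)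
qed




lemma pathin_reverse: "pathin Y \<beta> \<Longrightarrow> pathin Y (\<lambda>t. \<beta> (1 - t))"
  unfolding pathin_def by (rule cm_reparam) (auto intro!: continuous_intros)

lemma sc_paths:
  assumes sc: "simply_connected_space Y" and a: "pathin Y \<alpha>" and b: "pathin Y \<beta>"
    and e: "\<beta> 0 = \<alpha> 0" and z: "\<beta> 1 = \<alpha> 1"
  shows "homotopic_with (\<lambda>h. h 0 = \<alpha> 0 \<and> h 1 = \<alpha> 1) I01 Y \<alpha> \<beta>"
proof -
  define L where "L = path_join \<alpha> (\<lambda>t. \<beta> (1 - t))"
  have pL: "pathin Y L" unfolding L_def using a pathin_reverse[OF b] z by (intro pathin_join) auto
  have L01: "L 0 = \<alpha> 0" "L 1 = \<alpha> 0" using e by (auto simp: L_def path_join_def)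
  have Ll: "L \<in> loops Y (\<alpha> 0)" using pL L01 by (simp add: loops_def)
  have a0: "\<alpha> 0 \<in> topspace Y" using a by (simp add: path_start_in_topspace)
  have "loop_homotopic Y (\<alpha> 0) L (\<lambda>t. \<alpha> 0)"
    using sc a0 Ll unfolding simply_connected_space_def by blast
  then have hw: "homotopic_with (\<lambda>h. h 0 = \<alpha> 0 \<and> h 1 = \<alpha> 0) I01 Y L (\<lambda>t. \<alpha> 0)"
    by (simp add: loop_homotopic_def)
  obtain K :: "real \<times> real \<Rightarrow> _" where K0: "continuous_map (prod_topology I01 I01) Y K"
    "\<forall>t. K (0, t) = L t" "\<forall>t. K (1, t) = \<alpha> 0" "\<forall>s\<in>{0..1}. K (s, 0) = \<alpha> 0 \<and> K (s, 1) = \<alpha> 0"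
    using hw unfolding homotopic_with_def by auto
  have cK: "continuous_map (top_of_set ({0..1} \<times> {0..1})) Y K" using K0(1) by simp
  define bs where "bs = (\<lambda>s::real. min 1 (min (3 * s) (3 - 3 * s)))"
  define bt where "bt = (\<lambda>s::real. max 0 (min 1 (3 * s - 1)))"
  define \<phi> where "\<phi> = (\<lambda>z::real\<times>real. ((1 - snd z) * bs (fst z), (1 - snd z) * bt (fst z) + snd z / 2))"
  have bs01: "bs s \<in> {0..1}" if "s \<in> {0..1}" for s using that by (auto simp: bs_def)
  have bt01: "bt s \<in> {0..1}" if "s \<in> {0..1}" for s using that by (auto simp: bt_def)
  have \<phi>01: "\<phi> z \<in> {0..1} \<times> {0..1}" if "z \<in> {0..1} \<times> {0..1}" for z
  proof -
    obtain s t where z0: "z = (s, t)" by (cases z)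
    then have z: "z = (s, t)" "s \<in> {0..1}" "t \<in> {0..1}" using that by auto
    have "0 \<le> (1 - t) * bs s" using bs01[OF z(2)] z(3) by auto
    moreover have "(1 - t) * bs s \<le> 1" using bs01[OF z(2)] z(3) by (intro mult_le_one) auto
    moreover have "0 \<le> (1 - t) * bt s + t / 2" using bt01[OF z(2)] z(3) by auto
    moreover have "(1 - t) * bt s \<le> (1 - t) * 1" using bt01[OF z(2)] z(3) by (intro mult_left_mono) auto
    then have "(1 - t) * bt s + t / 2 \<le> 1" using z(3) by auto
    ultimately show ?thesis using z by (simp add: \<phi>_def)
  qed
  have cphi: "continuous_on ({0..1} \<times> {0..1}) \<phi>"
    unfolding \<phi>_def bs_def bt_def by (intro continuous_intros) auto
  define H where "H = (\<lambda>z. K (\<phi> z))"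
  have cH: "continuous_map (top_of_set ({0..1} \<times> {0..1})) Y H"
    unfolding H_def by (rule cm_reparam[OF cK cphi]) (use \<phi>01 in blast)
  show ?thesis
  proof (rule homotopicI[OF cH])
    fix t :: real assume t: "t \<in> {0..1}"
    have "\<phi> (0, t) = (0, t / 2)" by (simp add: \<phi>_def bs_def bt_def)
    then show "H (0, t) = \<alpha> t" using t K0(2) by (simp add: H_def L_def path_join_def)
  next
    fix t :: real assume t: "t \<in> {0..1}"
    have "\<phi> (1, t) = (0, 1 - t / 2)" by (simp add: \<phi>_def bs_def bt_def algebra_simps)
    then have H1: "H (1, t) = L (1 - t / 2)" using K0(2) by (simp add: H_def)
    show "H (1, t) = \<beta> t"
    proof (cases "t = 1")
      case True then show ?thesis using H1 z by (simp add: L_def path_join_def)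
    next
      case False
      then have "\<not> 1 - t / 2 \<le> 1 / 2" using t by auto
      moreover have "1 - (2 * (1 - t / 2) - 1) = t" by simp
      ultimately show ?thesis using H1 by (simp add: L_def path_join_def)
    qed
  next
    fix s :: real assume s: "s \<in> {0..1}"
    have "H (s, 0) = K (bs s, bt s)" by (simp add: H_def \<phi>_def)
    also have "\<dots> = \<alpha> 0"
    proof -
      consider "s \<le> 1/3" | "1/3 \<le> s \<and> s \<le> 2/3" | "2/3 \<le> s" by linarith
      then show ?thesis
      proof cases
        case 1 then have "bt s = 0" by (simp add: bt_def)
        then show ?thesis using K0(4) bs01[OF s] by simp
      next
        case 2 then have "bs s = 1" by (simp add: bs_def)
        then show ?thesis using K0(3) by simp
      next
        case 3 then have "bt s = 1" by (simp add: bt_def)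
        then show ?thesis using K0(4) bs01[OF s] by simp
      qed
    qed
    finally have "H (s, 0) = \<alpha> 0" .
    moreover have "H (s, 1) = \<alpha> 1"
    proof -
      have "\<phi> (s, 1) = (0, 1/2)" by (simp add: \<phi>_def)
      then show ?thesis using K0(2) by (simp add: H_def L_def path_join_def)
    qed
    ultimately show "H (s, 0) = \<alpha> 0 \<and> H (s, 1) = \<alpha> 1" by simp
  qed (use e z in auto)
qed




lemma word_eval_cong:
  "(\<And>i b. (i, b) \<in> set w \<Longrightarrow> \<rho> i = \<sigma> i) \<Longrightarrow> word_eval G \<rho> w = word_eval G \<sigma> w"
proof (induction w)
  case (Cons l w)
  obtain i b where l: "l = (i, b)" by (cases l)
  have "\<rho> i = \<sigma> i" using Cons.prems[of i b] l by simp
  moreover have "word_eval G \<rho> w = word_eval G \<sigma> w" using Cons.IH Cons.prems by auto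
  ultimately show ?case using l by simp
qed simp

lemma word_eval_closed:
  assumes "group G" "\<And>i b. (i, b) \<in> set w \<Longrightarrow> \<rho> i \<in> carrier G"
  shows "word_eval G \<rho> w \<in> carrier G"
  using assms(2)
proof (induction w)
  case Nil then show ?case using assms(1) by (simp add: group.is_monoid monoid.one_closed)
next
  case (Cons l w)
  obtain i b where l: "l = (i, b)" by (cases l)
  have "\<rho> i \<in> carrier G" using Cons.prems l by auto
  moreover have "word_eval G \<rho> w \<in> carrier G" using Cons by auto
  ultimately show ?case using assms(1) l by (auto intro: group.inv_closed monoid.m_closed group.is_monoid)
qed

lemma word_eval_hom:
  assumes G: "group G" and H: "group H" and h: "h \<in> hom G H"
    and c: "\<And>i b. (i, b) \<in> set w \<Longrightarrow> \<rho> i \<in> carrier G"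
  shows "h (word_eval G \<rho> w) = word_eval H (\<lambda>i. h (\<rho> i)) w"
  using c
proof (induction w)
  case Nil then show ?case using hom_one[OF h G H] by simp
next
  case (Cons l w)
  obtain i b where l: "l = (i, b)" by (cases l)
  have ri: "\<rho> i \<in> carrier G" using Cons.prems l by auto
  have cw: "word_eval G \<rho> w \<in> carrier G" using Cons.prems by (intro word_eval_closed[OF G]) auto
  have IH: "h (word_eval G \<rho> w) = word_eval H (\<lambda>i. h (\<rho> i)) w" using Cons by auto
  have gh: "group_hom G H h" using G H h by (simp add: group_hom_def group_hom_axioms_def)
  show ?case
  proof (cases b)
    case True
    then show ?thesis using l ri cw IH hom_mult[OF h] group.inv_closed[OF G ri] group_hom.hom_inv[OF gh ri]
      by simp
  next
    case False
    then show ?thesis using l ri cw IH hom_mult[OF h] by simp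
  qed
qed

lemma word_eval_ones:
  assumes "group G" "\<And>i b. (i, b) \<in> set w \<Longrightarrow> \<rho> i = \<one>\<^bsub>G\<^esub>"
  shows "word_eval G \<rho> w = \<one>\<^bsub>G\<^esub>"
  using assms(2)
proof (induction w)
  case (Cons l w)
  obtain i b where l: "l = (i, b)" by (cases l)
  have "\<rho> i = \<one>\<^bsub>G\<^esub>" using Cons.prems[of i b] l by simp
  moreover have "word_eval G \<rho> w = \<one>\<^bsub>G\<^esub>" using Cons.IH Cons.prems by auto
  ultimately show ?case using l assms(1) by (simp add: monoid.inv_one group.is_monoid monoid.l_one monoid.one_closed)
qed simp

definition expsum :: "nat \<Rightarrow> word \<Rightarrow> int" where
  "expsum k w = int (length (filter (\<lambda>l. l = (k, False)) w)) - int (length (filter (\<lambda>l. l = (k, True)) w))"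

lemma word_eval_single:
  assumes G: "group G" and g: "g \<in> carrier G"
    and \<rho>: "\<And>i b. (i, b) \<in> set w \<Longrightarrow> \<rho> i = (if i = k then g else \<one>\<^bsub>G\<^esub>)"
  shows "word_eval G \<rho> w = g [^]\<^bsub>G\<^esub> expsum k w"
  using \<rho>
proof (induction w)
  case Nil then show ?case by (simp add: expsum_def)
next
  case (Cons l w)
  obtain i b where l: "l = (i, b)" by (cases l)
  have IH: "word_eval G \<rho> w = g [^]\<^bsub>G\<^esub> expsum k w" using Cons by auto
  have ri: "\<rho> i = (if i = k then g else \<one>\<^bsub>G\<^esub>)" using Cons.prems[of i b] l by simp
  have cl: "g [^]\<^bsub>G\<^esub> expsum k w \<in> carrier G" using G g by (simp add: group.int_pow_closed)
  show ?case
  proof (cases "i = k")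
    case True
    show ?thesis
    proof (cases b)
      case b: True
      have "expsum k (l # w) = -1 + expsum k w" using l True b by (simp add: expsum_def)
      then have "g [^]\<^bsub>G\<^esub> expsum k (l # w) = g [^]\<^bsub>G\<^esub> (-1::int) \<otimes>\<^bsub>G\<^esub> g [^]\<^bsub>G\<^esub> expsum k w"
        by (simp only: group.int_pow_mult[OF G g])
      also have "g [^]\<^bsub>G\<^esub> (-1::int) = inv\<^bsub>G\<^esub> g"
        using group.int_pow_neg[OF G g, of 1] group.int_pow_1[OF G g] by simp
      finally show ?thesis using l True b ri IH by simp
    next
      case b: False
      have "expsum k (l # w) = 1 + expsum k w" using l True b by (simp add: expsum_def)
      then have "g [^]\<^bsub>G\<^esub> expsum k (l # w) = g [^]\<^bsub>G\<^esub> (1::int) \<otimes>\<^bsub>G\<^esub> g [^]\<^bsub>G\<^esub> expsum k w"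
        by (simp only: group.int_pow_mult[OF G g])
      then show ?thesis using l True b ri IH group.int_pow_1[OF G g] by simp
    qed
  next
    case False
    have "expsum k (l # w) = expsum k w" using l False by (simp add: expsum_def)
    then show ?thesis using l False ri IH cl G
      by (simp add: monoid.inv_one group.is_monoid monoid.l_one)
  qed
qed

lemma canc_expsum: "exponent_canceling_word w \<Longrightarrow> expsum k w = 0"
  by (simp add: exponent_canceling_word_def expsum_def)

lemma factor_incl_word:
  assumes G: "group G" and g: "g \<in> carrier G" and w: "\<And>i b. (i, b) \<in> set w \<Longrightarrow> i \<in> {1..r}"
    and canc: "exponent_canceling_word w"
  shows "word_eval G (factor_incl G r k g) w = \<one>\<^bsub>G\<^esub>"
proof -
  have "word_eval G (factor_incl G r k g) w = g [^]\<^bsub>G\<^esub> expsum k w"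
    by (rule word_eval_single[OF G g]) (use w in \<open>auto simp: factor_incl_def\<close>)
  then show ?thesis using canc_expsum[OF canc] by simp
qed

lemma tg_group: "topological_group X G \<Longrightarrow> group G"
  by (simp add: topological_group_def)

lemma tg_carrier: "topological_group X G \<Longrightarrow> carrier G = topspace X"
  by (simp add: topological_group_def)

lemma tg_mult:
  assumes "topological_group X G" "continuous_map Z X f" "continuous_map Z X g"
  shows "continuous_map Z X (\<lambda>z. f z \<otimes>\<^bsub>G\<^esub> g z)"
proof -
  have m: "continuous_map (prod_topology X X) X (\<lambda>(x, y). x \<otimes>\<^bsub>G\<^esub> y)"
    using assms(1) by (simp add: topological_group_def)
  have "continuous_map Z (prod_topology X X) (\<lambda>z. (f z, g z))"
    using assms(2,3) by (rule continuous_map_pairedI)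
  from continuous_map_compose[OF this m] show ?thesis by (simp add: o_def)
qed

lemma tg_inv:
  assumes "topological_group X G" "continuous_map Z X f"
  shows "continuous_map Z X (\<lambda>z. inv\<^bsub>G\<^esub> f z)"
proof -
  have m: "continuous_map X X (\<lambda>x. inv\<^bsub>G\<^esub> x)"
    using assms(1) unfolding topological_group_def by (elim conjE)
  from continuous_map_compose[OF assms(2) m] show ?thesis by (simp add: o_def)
qed

lemma tg_one:
  assumes "topological_group X G" shows "\<one>\<^bsub>G\<^esub> \<in> topspace X"
proof -
  have "group G" "carrier G = topspace X" using tg_group[OF assms] tg_carrier[OF assms] by auto
  then show ?thesis using group.is_monoid monoid.one_closed by metis
qed

lemma word_eval_cont:
  assumes tg: "topological_group X G" and w: "\<And>i b. (i, b) \<in> set w \<Longrightarrow> i \<in> I"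
  shows "continuous_map (product_topology (\<lambda>k. X) I) X (\<lambda>\<rho>. word_eval G \<rho> w)"
  using w
proof (induction w)
  case Nil then show ?case using tg_one[OF tg] by simp
next
  case (Cons l w)
  obtain i b where l: "l = (i, b)" by (cases l)
  have iI: "i \<in> I" using Cons.prems l by auto
  have ci: "continuous_map (product_topology (\<lambda>k. X) I) X (\<lambda>\<rho>. \<rho> i)"
    using continuous_map_product_projection[OF iI, of "\<lambda>k. X"] by simp
  have cw: "continuous_map (product_topology (\<lambda>k. X) I) X (\<lambda>\<rho>. word_eval G \<rho> w)" using Cons by auto
  show ?case
  proof (cases b)
    case True
    then show ?thesis using l tg_mult[OF tg tg_inv[OF tg ci] cw] by simp
  next
    case False
    then show ?thesis using l tg_mult[OF tg ci cw] by simp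
  qed
qed




lemma connected_I01: "connected_space I01"
  by (rule connected_space_subtopology) (simp add: connected_Icc)

lemma connected_sq: "connected_space (top_of_set ({0..1::real} \<times> {0..1::real}))"
  by (rule connected_space_subtopology) (simp add: connected_Times connected_Icc)

lemma induced_class:
  assumes "continuous_map Y Z \<phi>" "f \<in> loops Y y"
  shows "induced_pi1 Z (\<phi> y) \<phi> (loop_class Y y f) = loop_class Z (\<phi> y) (\<phi> \<circ> f)"
proof -
  have "{h. \<exists>a\<in>loop_class Y y f. loop_homotopic Z (\<phi> y) (\<phi> \<circ> a) h} = loop_class Z (\<phi> y) (\<phi> \<circ> f)"
  proof safe
    fix h a assume "a \<in> loop_class Y y f" "loop_homotopic Z (\<phi> y) (\<phi> \<circ> a) h"
    then have "loop_homotopic Y y f a" by (simp add: loop_class_def)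
    then have "loop_homotopic Z (\<phi> y) (\<phi> \<circ> f) (\<phi> \<circ> a)" by (rule lh_compose[OF _ assms(1)])
    then show "h \<in> loop_class Z (\<phi> y) (\<phi> \<circ> f)"
      using \<open>loop_homotopic Z (\<phi> y) (\<phi> \<circ> a) h\<close> by (simp add: loop_class_def lh_trans)
  next
    fix h assume "h \<in> loop_class Z (\<phi> y) (\<phi> \<circ> f)"
    moreover have "f \<in> loop_class Y y f" using assms(2) by (simp add: loop_class_def lh_refl)
    ultimately show "\<exists>a\<in>loop_class Y y f. loop_homotopic Z (\<phi> y) (\<phi> \<circ> a) h"
      by (auto simp: loop_class_def)
  qed
  then show ?thesis by (simp add: induced_pi1_def)
qed

lemma lh_eqI:
  assumes "f \<in> loops X x" "\<And>t. t \<in> {0..1} \<Longrightarrow> g t = f t" "g 0 = x" "g 1 = x"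
  shows "loop_homotopic X x f g"
proof -
  have pf: "pathin X f" using assms(1) by (simp add: loops_def)
  have "pathin X g" using pf unfolding pathin_def by (rule continuous_map_eq) (simp add: assms(2))
  then have gl: "g \<in> loops X x" using assms(3,4) by (simp add: loops_def)
  have "homotopic_with (\<lambda>h. h 0 = x \<and> h 1 = x) I01 X f g"
    by (rule homotopic_with_equal) (use assms(1) pf gl in \<open>auto simp: loops_def pathin_def assms(2)\<close>)
  then show ?thesis using assms(1) gl by (simp add: loop_homotopic_def)
qed

locale setting =
  fixes X :: "'g topology" and G :: "'g monoid" and Xt :: "'h topology" and Gt :: "'h monoid"
    and p :: "'h \<Rightarrow> 'g" and r :: nat and R :: "word set"
  assumes tgX: "topological_group X G" and G_conn: "connected_space X"
    and tgXt: "topological_group Xt Gt"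
    and p_hom: "p \<in> hom Gt G" and p_cov: "covering_map Xt X p"
    and R_gens: "\<forall>w\<in>R. \<forall>(i, b)\<in>set w. i \<in> {1..r}"
    and R_canc: "\<forall>w\<in>R. exponent_canceling_word w"
    and Hom_sc: "simply_connected_space (hom_space Xt Gt r R)"
begin

abbreviation "PX \<equiv> product_topology (\<lambda>k. X) {1..r}"
abbreviation "PXt \<equiv> product_topology (\<lambda>k. Xt) {1..r}"
abbreviation "HS \<equiv> hom_space X G r R"
abbreviation "HSt \<equiv> hom_space Xt Gt r R"
abbreviation "H0 \<equiv> hom0_space X G r R"
abbreviation "triv \<equiv> trivial_rep G r"
abbreviation "trivt \<equiv> trivial_rep Gt r"
definition "P \<rho> = (\<lambda>k\<in>{1..r}. p (\<rho> k))"

lemma grG: "group G" using tgX by (rule tg_group)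
lemma grGt: "group Gt" using tgXt by (rule tg_group)
lemma carG: "carrier G = topspace X" using tgX by (rule tg_carrier)
lemma carGt: "carrier Gt = topspace Xt" using tgXt by (rule tg_carrier)

lemma p_one: "p \<one>\<^bsub>Gt\<^esub> = \<one>\<^bsub>G\<^esub>" using hom_one[OF p_hom grGt grG] .

lemma p_cont: "continuous_map Xt X p" using p_cov by (rule coveringC)

lemma p_mult: "x \<in> carrier Gt \<Longrightarrow> y \<in> carrier Gt \<Longrightarrow> p (x \<otimes>\<^bsub>Gt\<^esub> y) = p x \<otimes>\<^bsub>G\<^esub> p y"
  using hom_mult[OF p_hom] .

lemma p_carrier: "x \<in> carrier Gt \<Longrightarrow> p x \<in> carrier G"
  using p_hom by (auto simp: hom_def)

lemma letters: "w \<in> R \<Longrightarrow> (i, b) \<in> set w \<Longrightarrow> i \<in> {1..r}"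
  using R_gens by fastforce

lemma hs_topspace: "topspace HS = hom_set G r R"
proof -
  have "hom_set G r R \<subseteq> topspace PX" by (auto simp: hom_set_def carG)
  then show ?thesis by (simp add: hom_space_def Int_absorb1)
qed

lemma hst_topspace: "topspace HSt = hom_set Gt r R"
proof -
  have "hom_set Gt r R \<subseteq> topspace PXt" by (auto simp: hom_set_def carGt)
  then show ?thesis by (simp add: hom_space_def Int_absorb1)
qed

lemma triv_hs: "triv \<in> hom_set G r R"
proof -
  have "word_eval G triv w = \<one>\<^bsub>G\<^esub>" if "w \<in> R" for w
    by (rule word_eval_ones[OF grG]) (use letters[OF that] in \<open>auto simp: trivial_rep_def\<close>)
  moreover have "triv \<in> (\<Pi>\<^sub>E k\<in>{1..r}. carrier G)"
    using grG by (auto simp: trivial_rep_def group.is_monoid monoid.one_closed)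
  ultimately show ?thesis by (simp add: hom_set_def)
qed

lemma trivt_hs: "trivt \<in> hom_set Gt r R"
proof -
  have "word_eval Gt trivt w = \<one>\<^bsub>Gt\<^esub>" if "w \<in> R" for w
    by (rule word_eval_ones[OF grGt]) (use letters[OF that] in \<open>auto simp: trivial_rep_def\<close>)
  moreover have "trivt \<in> (\<Pi>\<^sub>E k\<in>{1..r}. carrier Gt)"
    using grGt by (auto simp: trivial_rep_def group.is_monoid monoid.one_closed)
  ultimately show ?thesis by (simp add: hom_set_def)
qed

lemma P_triv: "P trivt = triv"
  by (auto simp: P_def trivial_rep_def p_one)

lemma P_cont: "continuous_map PXt PX P"
proof -
  have "continuous_map PXt X (\<lambda>\<rho>. p (\<rho> k))" if "k \<in> {1..r}" for k
    using continuous_map_compose[OF continuous_map_product_projection[OF that] p_cont]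
    by (simp add: o_def)
  then show ?thesis unfolding P_def
    by (auto simp: continuous_map_componentwise)
qed

lemma P_hs: assumes "\<rho> \<in> hom_set Gt r R" shows "P \<rho> \<in> hom_set G r R"
proof -
  have c: "\<rho> \<in> (\<Pi>\<^sub>E k\<in>{1..r}. carrier Gt)" and wr: "\<And>w. w \<in> R \<Longrightarrow> word_eval Gt \<rho> w = \<one>\<^bsub>Gt\<^esub>"
    using assms by (auto simp: hom_set_def)
  have "P \<rho> \<in> (\<Pi>\<^sub>E k\<in>{1..r}. carrier G)" using c p_carrier by (auto simp: P_def)
  moreover have "word_eval G (P \<rho>) w = \<one>\<^bsub>G\<^esub>" if w: "w \<in> R" for w
  proof -
    have "word_eval G (P \<rho>) w = word_eval G (\<lambda>i. p (\<rho> i)) w"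
      by (rule word_eval_cong) (use letters[OF w] in \<open>auto simp: P_def\<close>)
    also have "\<dots> = p (word_eval Gt \<rho> w)"
      by (rule word_eval_hom[OF grGt grG p_hom, symmetric]) (use letters[OF w] c in auto)
    also have "\<dots> = \<one>\<^bsub>G\<^esub>" using wr[OF w] p_one by simp
    finally show ?thesis .
  qed
  ultimately show ?thesis by (simp add: hom_set_def)
qed

lemma P_cont_hs: "continuous_map HSt HS P"
proof -
  have "continuous_map HSt PX P"
    unfolding hom_space_def by (rule continuous_map_from_subtopology[OF P_cont])
  moreover have "P \<in> topspace HSt \<rightarrow> hom_set G r R" using P_hs hst_topspace by auto
  ultimately show ?thesis unfolding hom_space_def by (rule continuous_map_into_subtopology)
qed

end




context setting begin

lemma comp_sub: "connected_component_of_set HS triv \<subseteq> topspace HS"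
  using connected_component_of_subset_topspace by fastforce

lemma h0_topspace: "topspace H0 = connected_component_of_set HS triv"
  using comp_sub by (auto simp: hom0_space_def)

lemma triv_H0: "triv \<in> topspace H0"
  unfolding h0_topspace using triv_hs hs_topspace by (simp add: connected_component_of_refl)

lemma into_H0:
  assumes f: "continuous_map Z HS f" and Z: "connected_space Z" and z0: "z0 \<in> topspace Z" and fz0: "f z0 = triv"
  shows "continuous_map Z H0 f"
proof -
  have "connectedin HS (f ` topspace Z)"
    by (rule connectedin_continuous_map_image[OF f]) (use Z in \<open>simp add: connectedin_topspace\<close>)
  then have "f ` topspace Z \<subseteq> connected_component_of_set HS triv"
    by (rule connected_component_of_maximal) (use z0 fz0 in force)
  then show ?thesis unfolding hom0_space_def using f by (intro continuous_map_into_subtopology) auto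
qed

lemma H0_HS: "continuous_map Z H0 f \<Longrightarrow> continuous_map Z HS f"
  unfolding hom0_space_def by (simp add: continuous_map_in_subtopology)

lemma HS_PX: "continuous_map Z HS f \<Longrightarrow> continuous_map Z PX f"
  unfolding hom_space_def by (simp add: continuous_map_in_subtopology)

lemma HSt_PXt: "continuous_map Z HSt f \<Longrightarrow> continuous_map Z PXt f"
  unfolding hom_space_def by (simp add: continuous_map_in_subtopology)

lemma proj_cont: assumes "k \<in> {1..r}" shows "continuous_map H0 X (\<lambda>\<rho>. \<rho> k)"
proof -
  have "continuous_map H0 PX id" by (rule HS_PX, rule H0_HS) simp
  from continuous_map_compose[OF this continuous_map_product_projection[OF assms]] show ?thesis
    by (simp add: o_def)
qed

lemma fi_hs: assumes "g \<in> carrier G" shows "factor_incl G r k g \<in> hom_set G r R"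
proof -
  have "factor_incl G r k g \<in> (\<Pi>\<^sub>E j\<in>{1..r}. carrier G)"
    using assms grG by (auto simp: factor_incl_def group.is_monoid monoid.one_closed)
  moreover have "word_eval G (factor_incl G r k g) w = \<one>\<^bsub>G\<^esub>" if "w \<in> R" for w
    by (rule factor_incl_word[OF grG assms]) (use letters[OF that] R_canc that in auto)
  ultimately show ?thesis by (simp add: hom_set_def)
qed

lemma fi_one: "factor_incl G r k \<one>\<^bsub>G\<^esub> = triv"
  by (auto simp: factor_incl_def trivial_rep_def)

lemma fi_cont: "continuous_map X H0 (factor_incl G r k)"
proof (rule into_H0)
  have "continuous_map X PX (factor_incl G r k)"
    unfolding continuous_map_componentwise
  proof (intro conjI ballI)
    show "factor_incl G r k ` topspace X \<subseteq> extensional {1..r}" by (auto simp: factor_incl_def)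
    fix j assume j: "j \<in> {1..r}"
    show "continuous_map X X (\<lambda>x. factor_incl G r k x j)"
    proof (cases "j = k")
      case True then show ?thesis using j by (simp add: factor_incl_def)
    next
      case False then show ?thesis using j tg_one[OF tgX] by (simp add: factor_incl_def)
    qed
  qed
  then show "continuous_map X HS (factor_incl G r k)"
    unfolding hom_space_def using fi_hs carG by (intro continuous_map_into_subtopology) auto
  show "\<one>\<^bsub>G\<^esub> \<in> topspace X" by (rule tg_one[OF tgX])
qed (use G_conn fi_one in auto)

lemma lift_in_hom:
  assumes c: "continuous_map I01 PXt \<gamma>" and g0: "\<gamma> 0 = trivt"
    and hs: "\<And>t. t \<in> {0..1} \<Longrightarrow> P (\<gamma> t) \<in> hom_set G r R"
  shows "continuous_map I01 HSt \<gamma>"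
proof -
  have car: "\<gamma> t \<in> (\<Pi>\<^sub>E k\<in>{1..r}. carrier Gt)" if "t \<in> {0..1}" for t
    using c that carGt by (auto simp: continuous_map_def)
  have "word_eval Gt (\<gamma> t) w = \<one>\<^bsub>Gt\<^esub>" if t: "t \<in> {0..1}" and w: "w \<in> R" for t w
  proof -
    have cw: "continuous_map I01 Xt (\<lambda>t. word_eval Gt (\<gamma> t) w)"
      using continuous_map_compose[OF c word_eval_cont[OF tgXt letters[OF w]]] by (simp add: o_def)
    have pc: "p (word_eval Gt (\<gamma> s) w) = \<one>\<^bsub>G\<^esub>" if s: "s \<in> topspace I01" for s
    proof -
      have s01: "s \<in> {0..1}" using s by simp
      have "p (word_eval Gt (\<gamma> s) w) = word_eval G (\<lambda>i. p (\<gamma> s i)) w"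
        by (rule word_eval_hom[OF grGt grG p_hom]) (use car[OF s01] letters[OF w] in auto)
      also have "\<dots> = word_eval G (P (\<gamma> s)) w"
        by (rule word_eval_cong) (use letters[OF w] in \<open>auto simp: P_def\<close>)
      also have "\<dots> = \<one>\<^bsub>G\<^esub>" using hs[OF s01] w by (simp add: hom_set_def)
      finally show ?thesis .
    qed
    have "word_eval Gt (\<gamma> t) w = word_eval Gt (\<gamma> 0) w"
      by (rule cov_const_lift[OF p_cov connected_I01 cw pc]) (use t in auto)
    also have "\<dots> = \<one>\<^bsub>Gt\<^esub>" using g0 trivt_hs w by (simp add: hom_set_def)
    finally show ?thesis .
  qed
  then have "\<gamma> t \<in> hom_set Gt r R" if "t \<in> {0..1}" for t using car that by (simp add: hom_set_def)
  then show ?thesis unfolding hom_space_def using c by (intro continuous_map_into_subtopology) auto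
qed

lemma main_eq:
  assumes \<alpha>: "\<alpha> \<in> loops H0 triv" and \<beta>: "\<beta> \<in> loops H0 triv"
    and a: "continuous_map I01 PXt a" "a 0 = trivt" "\<And>t. t \<in> {0..1} \<Longrightarrow> P (a t) = \<alpha> t"
    and b: "continuous_map I01 PXt b" "b 0 = trivt" "\<And>t. t \<in> {0..1} \<Longrightarrow> P (b t) = \<beta> t"
    and ab: "a 1 = b 1"
  shows "loop_homotopic H0 triv \<alpha> \<beta>"
proof -
  have \<alpha>hs: "\<alpha> t \<in> hom_set G r R" if "t \<in> {0..1}" for t
  proof -
    have "\<alpha> t \<in> topspace H0" using \<alpha> that by (auto simp: loops_def pathin_def continuous_map_def)
    then show ?thesis using comp_sub hs_topspace h0_topspace by auto
  qed
  have \<beta>hs: "\<beta> t \<in> hom_set G r R" if "t \<in> {0..1}" for t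
  proof -
    have "\<beta> t \<in> topspace H0" using \<beta> that by (auto simp: loops_def pathin_def continuous_map_def)
    then show ?thesis using comp_sub hs_topspace h0_topspace by auto
  qed
  have ah: "pathin HSt a" unfolding pathin_def by (rule lift_in_hom[OF a(1,2)]) (use a(3) \<alpha>hs in auto)
  have bh: "pathin HSt b" unfolding pathin_def by (rule lift_in_hom[OF b(1,2)]) (use b(3) \<beta>hs in auto)
  have hw: "homotopic_with (\<lambda>h. h 0 = a 0 \<and> h 1 = a 1) I01 HSt a b"
    by (rule sc_paths[OF Hom_sc ah bh]) (use a(2) b(2) ab in auto)
  obtain K :: "real \<times> real \<Rightarrow> _" where K0: "continuous_map (prod_topology I01 I01) HSt K"
    "\<forall>t. K (0, t) = a t" "\<forall>t. K (1, t) = b t" "\<forall>s\<in>{0..1}. K (s, 0) = a 0 \<and> K (s, 1) = a 1"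
    using hw unfolding homotopic_with_def by auto
  have cK: "continuous_map (top_of_set ({0..1} \<times> {0..1})) HSt K" using K0(1) by simp
  define H where "H = (\<lambda>z. P (K z))"
  have cH: "continuous_map (top_of_set ({0..1} \<times> {0..1})) HS H"
    unfolding H_def using continuous_map_compose[OF cK P_cont_hs] by (simp add: o_def)
  have Htriv: "H (0, 0) = triv" using K0(2) a(2) P_triv by (simp add: H_def)
  have cH0: "continuous_map (top_of_set ({0..1} \<times> {0..1})) H0 H"
    by (rule into_H0[OF cH connected_sq _ Htriv]) simp
  have a1: "P (a 1) = triv" using a(3)[of 1] \<alpha> by (simp add: loops_def)
  show ?thesis unfolding loop_homotopic_def
  proof (intro conjI \<alpha> \<beta>)
    show "homotopic_with (\<lambda>h. h 0 = triv \<and> h 1 = triv) I01 H0 \<alpha> \<beta>"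
    proof (rule homotopicI[OF cH0])
      fix t :: real assume t: "t \<in> {0..1}"
      show "H (0, t) = \<alpha> t" using K0(2) a(3)[OF t] by (simp add: H_def)
      show "H (1, t) = \<beta> t" using K0(3) b(3)[OF t] by (simp add: H_def)
    next
      fix s :: real assume s: "s \<in> {0..1}"
      show "H (s, 0) = triv \<and> H (s, 1) = triv" using K0(4) s a(2) P_triv a1 by (simp add: H_def)
    qed (use \<alpha> \<beta> in \<open>auto simp: loops_def\<close>)
  qed
qed

end




primrec Jn :: "'g monoid \<Rightarrow> nat \<Rightarrow> (nat \<Rightarrow> real \<Rightarrow> 'g) \<Rightarrow> nat \<Rightarrow> real \<Rightarrow> nat \<Rightarrow> 'g" where
  "Jn G r f 0 = (\<lambda>t. trivial_rep G r)"
| "Jn G r f (Suc n) = path_join (Jn G r f n) (\<lambda>t. factor_incl G r (Suc n) (f (Suc n) t))"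

definition mulv :: "'h monoid \<Rightarrow> nat \<Rightarrow> (nat \<Rightarrow> 'h) \<Rightarrow> (nat \<Rightarrow> 'h) \<Rightarrow> nat \<Rightarrow> 'h" where
  "mulv H r c \<rho> = (\<lambda>k\<in>{1..r}. c k \<otimes>\<^bsub>H\<^esub> \<rho> k)"

definition cend :: "'h monoid \<Rightarrow> nat \<Rightarrow> (nat \<Rightarrow> real \<Rightarrow> 'h) \<Rightarrow> nat \<Rightarrow> nat \<Rightarrow> 'h" where
  "cend H r ft n = (\<lambda>k\<in>{1..r}. if k \<le> n then ft k 1 else \<one>\<^bsub>H\<^esub>)"

primrec Jt :: "'h monoid \<Rightarrow> nat \<Rightarrow> (nat \<Rightarrow> real \<Rightarrow> 'h) \<Rightarrow> nat \<Rightarrow> real \<Rightarrow> nat \<Rightarrow> 'h" where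
  "Jt H r ft 0 = (\<lambda>t. trivial_rep H r)"
| "Jt H r ft (Suc n) = path_join (Jt H r ft n) (\<lambda>t. mulv H r (cend H r ft n) (factor_incl H r (Suc n) (ft (Suc n) t)))"

context setting begin

lemma fi_loop:
  assumes "g \<in> loops X \<one>\<^bsub>G\<^esub>" shows "(\<lambda>t. factor_incl G r k (g t)) \<in> loops H0 triv"
  using loops_compose[OF assms fi_cont[of k]] fi_one by (simp add: o_def)

lemma Jn_loop:
  assumes f: "\<And>k. k \<in> {1..r} \<Longrightarrow> f k \<in> loops X \<one>\<^bsub>G\<^esub>" and n: "n \<le> r"
  shows "Jn G r f n \<in> loops H0 triv"
  using n
proof (induction n)
  case 0 then show ?case using triv_H0 by (simp add: const_loop)
next
  case (Suc n)
  have "Suc n \<in> {1..r}" using Suc.prems by auto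
  then show ?case using Suc by (simp add: join_loops fi_loop f)
qed

lemma P_join: "P (path_join A B t) = path_join (\<lambda>t. P (A t)) (\<lambda>t. P (B t)) t"
  by (simp add: path_join_def)

lemma mulv_cont:
  assumes c: "c \<in> (\<Pi>\<^sub>E k\<in>{1..r}. carrier Gt)" and \<rho>: "continuous_map Z PXt \<rho>"
  shows "continuous_map Z PXt (\<lambda>z. mulv Gt r c (\<rho> z))"
  unfolding continuous_map_componentwise
proof (intro conjI ballI)
  show "(\<lambda>z. mulv Gt r c (\<rho> z)) ` topspace Z \<subseteq> extensional {1..r}" by (auto simp: mulv_def)
  fix k assume k: "k \<in> {1..r}"
  have ck: "c k \<in> topspace Xt" using c k carGt by auto
  have "continuous_map Z Xt (\<lambda>z. \<rho> z k)"
    using continuous_map_compose[OF \<rho> continuous_map_product_projection[OF k]] by (simp add: o_def)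
  then have "continuous_map Z Xt (\<lambda>z. c k \<otimes>\<^bsub>Gt\<^esub> \<rho> z k)"
    using tg_mult[OF tgXt continuous_map_const[THEN iffD2, OF disjI2[OF ck]]] by blast
  then show "continuous_map Z Xt (\<lambda>z. mulv Gt r c (\<rho> z) k)" using k by (simp add: mulv_def)
qed

lemma P_mulv:
  assumes c: "c \<in> (\<Pi>\<^sub>E k\<in>{1..r}. carrier Gt)" "\<And>k. k \<in> {1..r} \<Longrightarrow> p (c k) = \<one>\<^bsub>G\<^esub>"
    and \<rho>: "\<rho> \<in> (\<Pi>\<^sub>E k\<in>{1..r}. carrier Gt)"
  shows "P (mulv Gt r c \<rho>) = P \<rho>"
proof -
  have "p (c k \<otimes>\<^bsub>Gt\<^esub> \<rho> k) = p (\<rho> k)" if k: "k \<in> {1..r}" for k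
  proof -
    have "p (c k \<otimes>\<^bsub>Gt\<^esub> \<rho> k) = p (c k) \<otimes>\<^bsub>G\<^esub> p (\<rho> k)" using c(1) \<rho> k by (intro p_mult) auto
    also have "\<dots> = p (\<rho> k)" using c(2)[OF k] p_carrier[of "\<rho> k"] \<rho> k grG
      by (simp add: group.is_monoid monoid.l_one PiE_iff)
    finally show ?thesis .
  qed
  then show ?thesis by (auto simp: P_def mulv_def)
qed

lemma mulv_in: assumes "c \<in> (\<Pi>\<^sub>E k\<in>{1..r}. carrier Gt)" "\<rho> \<in> (\<Pi>\<^sub>E k\<in>{1..r}. carrier Gt)"
  shows "mulv Gt r c \<rho> \<in> (\<Pi>\<^sub>E k\<in>{1..r}. carrier Gt)"
  using assms grGt by (auto simp: mulv_def group.is_monoid monoid.m_closed PiE_iff)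

lemma fi_cont_t: assumes "continuous_map Z Xt g"
  shows "continuous_map Z PXt (\<lambda>z. factor_incl Gt r k (g z))"
  unfolding continuous_map_componentwise
proof (intro conjI ballI)
  show "(\<lambda>z. factor_incl Gt r k (g z)) ` topspace Z \<subseteq> extensional {1..r}" by (auto simp: factor_incl_def)
  fix j assume j: "j \<in> {1..r}"
  show "continuous_map Z Xt (\<lambda>z. factor_incl Gt r k (g z) j)"
  proof (cases "j = k")
    case True then show ?thesis using j assms by (simp add: factor_incl_def)
  next
    case False then show ?thesis using j tg_one[OF tgXt] by (simp add: factor_incl_def)
  qed
qed

lemma Jt_props:
  assumes f: "\<And>k. k \<in> {1..r} \<Longrightarrow> f k \<in> loops X \<one>\<^bsub>G\<^esub>"
    and ft: "\<And>k. k \<in> {1..r} \<Longrightarrow> pathin Xt (ft k)"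
    and ft0: "\<And>k. k \<in> {1..r} \<Longrightarrow> ft k 0 = \<one>\<^bsub>Gt\<^esub>"
    and ftp: "\<And>k t. k \<in> {1..r} \<Longrightarrow> t \<in> {0..1} \<Longrightarrow> p (ft k t) = f k t"
    and n: "n \<le> r"
  shows "continuous_map I01 PXt (Jt Gt r ft n) \<and> Jt Gt r ft n 0 = trivt \<and> Jt Gt r ft n 1 = cend Gt r ft n
     \<and> (\<forall>t\<in>{0..1}. P (Jt Gt r ft n t) = Jn G r f n t)"
  using n
proof (induction n)
  case 0
  have "continuous_map I01 PXt (\<lambda>t. trivt)"
    using trivt_hs carGt by (auto simp: hom_set_def)
  moreover have "trivt = cend Gt r ft 0" by (auto simp: trivial_rep_def cend_def)
  ultimately show ?case using P_triv by simp
next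
  case (Suc n)
  have k: "Suc n \<in> {1..r}" using Suc.prems by auto
  have IH: "continuous_map I01 PXt (Jt Gt r ft n)" "Jt Gt r ft n 0 = trivt" "Jt Gt r ft n 1 = cend Gt r ft n"
      "\<And>t. t \<in> {0..1} \<Longrightarrow> P (Jt Gt r ft n t) = Jn G r f n t" using Suc by auto
  define c where "c = cend Gt r ft n"
  have ftc: "ft j t \<in> carrier Gt" if "j \<in> {1..r}" "t \<in> {0..1}" for j t
    using ft[OF that(1)] that(2) carGt by (auto simp: pathin_def continuous_map_def)
  have cc: "c \<in> (\<Pi>\<^sub>E k\<in>{1..r}. carrier Gt)"
    using ftc grGt by (auto simp: c_def cend_def group.is_monoid monoid.one_closed)
  have cp: "p (c j) = \<one>\<^bsub>G\<^esub>" if "j \<in> {1..r}" for j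
    using that ftp[of j 1] f[of j] p_one by (auto simp: c_def cend_def loops_def)
  define S where "S = (\<lambda>t. mulv Gt r c (factor_incl Gt r (Suc n) (ft (Suc n) t)))"
  have fic: "factor_incl Gt r (Suc n) x \<in> (\<Pi>\<^sub>E k\<in>{1..r}. carrier Gt)" if "x \<in> carrier Gt" for x
    using that grGt by (auto simp: factor_incl_def group.is_monoid monoid.one_closed)
  have cS: "continuous_map I01 PXt S"
    unfolding S_def by (rule mulv_cont[OF cc fi_cont_t]) (use ft[OF k] in \<open>simp add: pathin_def\<close>)
  have S0: "S 0 = c"
  proof -
    have "c j \<otimes>\<^bsub>Gt\<^esub> \<one>\<^bsub>Gt\<^esub> = c j" if "j \<in> {1..r}" for j
      using cc that grGt by (auto simp: group.is_monoid monoid.r_one PiE_iff)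
    moreover have "c \<in> extensional {1..r}" using cc by (simp add: PiE_iff)
    ultimately show ?thesis using ft0[OF k] by (auto simp: S_def mulv_def factor_incl_def extensional_def)
  qed
  have S1: "S 1 = cend Gt r ft (Suc n)"
  proof -
    have "c j \<otimes>\<^bsub>Gt\<^esub> (if j = Suc n then ft (Suc n) 1 else \<one>\<^bsub>Gt\<^esub>) = (if j \<le> Suc n then ft j 1 else \<one>\<^bsub>Gt\<^esub>)"
      if j: "j \<in> {1..r}" for j
    proof -
      have m: "monoid Gt" using grGt by (simp add: group.is_monoid)
      have "ft j 1 \<in> carrier Gt" using ftc j by auto
      then show ?thesis using j m ftc[OF k, of 1] by (auto simp: c_def cend_def monoid.r_one monoid.l_one monoid.one_closed)
    qed
    then show ?thesis by (auto simp: S_def mulv_def factor_incl_def cend_def)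
  qed
  have PS: "P (S t) = factor_incl G r (Suc n) (f (Suc n) t)" if t: "t \<in> {0..1}" for t
  proof -
    have "P (S t) = P (factor_incl Gt r (Suc n) (ft (Suc n) t))"
      unfolding S_def by (rule P_mulv[OF cc cp fic]) (use ftc[OF k t] in auto)
    also have "\<dots> = factor_incl G r (Suc n) (f (Suc n) t)"
      using ftp[OF k t] p_one by (auto simp: P_def factor_incl_def)
    finally show ?thesis .
  qed
  have JS: "Jt Gt r ft (Suc n) = path_join (Jt Gt r ft n) S" by (simp add: S_def c_def)
  show ?case unfolding JS
  proof (intro conjI ballI)
    show "continuous_map I01 PXt (path_join (Jt Gt r ft n) S)"
      using pathin_join[of PXt "Jt Gt r ft n" S] IH(1) cS IH(3) S0 by (simp add: pathin_def c_def)
    show "path_join (Jt Gt r ft n) S 0 = trivt" using IH(2) by (simp add: path_join_def)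
    show "path_join (Jt Gt r ft n) S 1 = cend Gt r ft (Suc n)" using S1 by (simp add: path_join_def)
    fix t :: real assume t: "t \<in> {0..1}"
    show "P (path_join (Jt Gt r ft n) S t) = Jn G r f (Suc n) t"
    proof (cases "t \<le> 1/2")
      case True then have "2 * t \<in> {0..1}" using t by auto
      then show ?thesis using True IH(4) by (simp add: path_join_def)
    next
      case False then have "2 * t - 1 \<in> {0..1}" using t by auto
      then show ?thesis using False PS by (simp add: path_join_def)
    qed
  qed
qed

end




context setting begin

lemma proj_Jn:
  assumes f: "\<And>k. k \<in> {1..r} \<Longrightarrow> f k \<in> loops X \<one>\<^bsub>G\<^esub>" and k: "k \<in> {1..r}" and n: "n \<le> r"
  shows "loop_homotopic X \<one>\<^bsub>G\<^esub> (\<lambda>t. Jn G r f n t k) (if k \<le> n then f k else (\<lambda>t. \<one>\<^bsub>G\<^esub>))"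
  using n
proof (induction n)
  case 0
  have "(\<lambda>t. Jn G r f 0 t k) = (\<lambda>t. \<one>\<^bsub>G\<^esub>)" using k by (simp add: trivial_rep_def)
  moreover have "\<not> k \<le> 0" using k by simp
  ultimately show ?case using tg_one[OF tgX] by (simp add: lh_refl const_loop)
next
  case (Suc n)
  have IH: "loop_homotopic X \<one>\<^bsub>G\<^esub> (\<lambda>t. Jn G r f n t k) (if k \<le> n then f k else (\<lambda>t. \<one>\<^bsub>G\<^esub>))"
    using Suc by auto
  have e: "(\<lambda>t. Jn G r f (Suc n) t k) = path_join (\<lambda>t. Jn G r f n t k)
      (if k = Suc n then f (Suc n) else (\<lambda>t. \<one>\<^bsub>G\<^esub>))"
    using k by (auto simp: path_join_def factor_incl_def)
  have cl: "(\<lambda>t. \<one>\<^bsub>G\<^esub>) \<in> loops X \<one>\<^bsub>G\<^esub>" using tg_one[OF tgX] by (simp add: const_loop)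
  consider "k = Suc n" | "k \<le> n" | "Suc n < k" by linarith
  then show ?case
  proof cases
    case 1
    then have "loop_homotopic X \<one>\<^bsub>G\<^esub> (\<lambda>t. Jn G r f (Suc n) t k) (path_join (\<lambda>t. \<one>\<^bsub>G\<^esub>) (f k))"
    proof -
      have IH1: "loop_homotopic X \<one>\<^bsub>G\<^esub> (\<lambda>t. Jn G r f n t k) (\<lambda>t. \<one>\<^bsub>G\<^esub>)" using IH 1 by simp
      show ?thesis unfolding e using 1 lh_join[OF IH1 lh_refl[OF f[OF k]]] by simp
    qed
    then show ?thesis using 1 lh_trans lh_join_const_left[OF f[OF k]] by simp
  next
    case 2
    then have "loop_homotopic X \<one>\<^bsub>G\<^esub> (\<lambda>t. Jn G r f (Suc n) t k) (path_join (f k) (\<lambda>t. \<one>\<^bsub>G\<^esub>))"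
    proof -
      have IH1: "loop_homotopic X \<one>\<^bsub>G\<^esub> (\<lambda>t. Jn G r f n t k) (f k)" using IH 2 by simp
      show ?thesis unfolding e using 2 lh_join[OF IH1 lh_refl[OF cl]] by simp
    qed
    then show ?thesis using 2 lh_trans lh_join_const_right[OF f[OF k]] by simp
  next
    case 3
    then have "loop_homotopic X \<one>\<^bsub>G\<^esub> (\<lambda>t. Jn G r f (Suc n) t k) (path_join (\<lambda>t. \<one>\<^bsub>G\<^esub>) (\<lambda>t. \<one>\<^bsub>G\<^esub>))"
    proof -
      have IH1: "loop_homotopic X \<one>\<^bsub>G\<^esub> (\<lambda>t. Jn G r f n t k) (\<lambda>t. \<one>\<^bsub>G\<^esub>)" using IH 3 by simp
      show ?thesis unfolding e using 3 lh_join[OF IH1 lh_refl[OF cl]] by simp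
    qed
    then show ?thesis using 3 lh_trans lh_join_const_right[OF cl] by simp
  qed
qed

lemma ordprod_Jn:
  assumes f: "\<And>k. k \<in> {1..r} \<Longrightarrow> f k \<in> loops X \<one>\<^bsub>G\<^esub>"
    and a: "\<And>k. k \<in> {1..r} \<Longrightarrow> a k = loop_class X \<one>\<^bsub>G\<^esub> (f k)" and n: "n \<le> r"
  shows "ordprod (fundamental_group H0 triv) (\<lambda>k. induced_pi1 H0 triv (factor_incl G r k) (a k)) n
     = loop_class H0 triv (Jn G r f n)"
  using n
proof (induction n)
  case 0 then show ?case by (simp add: one_class)
next
  case (Suc n)
  have k: "Suc n \<in> {1..r}" using Suc.prems by auto
  have "induced_pi1 H0 triv (factor_incl G r (Suc n)) (a (Suc n))
      = loop_class H0 triv (\<lambda>t. factor_incl G r (Suc n) (f (Suc n) t))"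
    using induced_class[OF fi_cont f[OF k]] a[OF k] fi_one by (simp add: o_def)
  then show ?case using Suc mult_class[OF Jn_loop[OF f] fi_loop[OF f[OF k]]] by simp
qed

lemma lift_exists:
  assumes "g \<in> loops X \<one>\<^bsub>G\<^esub>"
  shows "\<exists>h. pathin Xt h \<and> h 0 = \<one>\<^bsub>Gt\<^esub> \<and> (\<forall>t\<in>{0..1}. p (h t) = g t)"
  by (rule path_lift[OF p_cov]) (use assms tg_one[OF tgXt] p_one in \<open>auto simp: loops_def\<close>)

definition "lft g = (SOME h. pathin Xt h \<and> h 0 = \<one>\<^bsub>Gt\<^esub> \<and> (\<forall>t\<in>{0..1}. p (h t) = g t))"

lemma lft: assumes "g \<in> loops X \<one>\<^bsub>G\<^esub>"
  shows "pathin Xt (lft g)" "lft g 0 = \<one>\<^bsub>Gt\<^esub>" "\<And>t. t \<in> {0..1} \<Longrightarrow> p (lft g t) = g t"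
  using someI_ex[OF lift_exists[OF assms]] unfolding lft_def by auto

lemma lft_end: assumes "g \<in> loops X \<one>\<^bsub>G\<^esub>" shows "p (lft g 1) = \<one>\<^bsub>G\<^esub>" "lft g 1 \<in> carrier Gt"
proof -
  show "p (lft g 1) = \<one>\<^bsub>G\<^esub>" using lft(3)[OF assms, of 1] assms by (simp add: loops_def)
  show "lft g 1 \<in> carrier Gt" using lft(1)[OF assms] carGt by (simp add: path_finish_in_topspace)
qed

lemma lift_join:
  assumes f: "f \<in> loops X \<one>\<^bsub>G\<^esub>" and g: "g \<in> loops X \<one>\<^bsub>G\<^esub>"
  defines "h \<equiv> path_join (lft f) (\<lambda>t. lft f 1 \<otimes>\<^bsub>Gt\<^esub> lft g t)"
  shows "pathin Xt h" "h 0 = \<one>\<^bsub>Gt\<^esub>" "\<And>t. t \<in> {0..1} \<Longrightarrow> p (h t) = path_join f g t"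
    "h 1 = lft f 1 \<otimes>\<^bsub>Gt\<^esub> lft g 1"
proof -
  have c1: "lft f 1 \<in> carrier Gt" by (rule lft_end[OF f])
  have m: "monoid Gt" using grGt by (simp add: group.is_monoid)
  have pg: "pathin Xt (\<lambda>t. lft f 1 \<otimes>\<^bsub>Gt\<^esub> lft g t)"
    unfolding pathin_def
    by (rule tg_mult[OF tgXt]) (use c1 carGt lft(1)[OF g] in \<open>simp_all add: pathin_def\<close>)
  show "pathin Xt h" unfolding h_def
    by (rule pathin_join[OF lft(1)[OF f] pg]) (use lft(2)[OF g] c1 m in \<open>simp add: monoid.r_one\<close>)
  show "h 0 = \<one>\<^bsub>Gt\<^esub>" using lft(2)[OF f] by (simp add: h_def path_join_def)
  show "h 1 = lft f 1 \<otimes>\<^bsub>Gt\<^esub> lft g 1" by (simp add: h_def path_join_def)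
  fix t :: real assume t: "t \<in> {0..1}"
  show "p (h t) = path_join f g t"
  proof (cases "t \<le> 1/2")
    case True then have "2 * t \<in> {0..1}" using t by auto
    then show ?thesis using True lft(3)[OF f] by (simp add: h_def path_join_def)
  next
    case False then have t2: "2 * t - 1 \<in> {0..1}" using t by auto
    have "lft g (2 * t - 1) \<in> carrier Gt" using lft(1)[OF g] t2 carGt by (auto simp: pathin_def continuous_map_def)
    then have "p (lft f 1 \<otimes>\<^bsub>Gt\<^esub> lft g (2 * t - 1)) = p (lft g (2 * t - 1))"
      using p_mult[OF c1] lft_end(1)[OF f] p_carrier grG by (simp add: group.is_monoid monoid.l_one)
    then show ?thesis using False lft(3)[OF g t2] by (simp add: h_def path_join_def)
  qed
qed

end




context setting begin

abbreviation "FG \<equiv> fundamental_group H0 triv"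
abbreviation "Pi1 \<equiv> product_group {1..r} (\<lambda>k. fundamental_group X \<one>\<^bsub>G\<^esub>)"

definition "rp a k = (SOME f. f \<in> loops X \<one>\<^bsub>G\<^esub> \<and> a k = loop_class X \<one>\<^bsub>G\<^esub> f)"

lemma rp: assumes "a \<in> carrier Pi1" "k \<in> {1..r}"
  shows "rp a k \<in> loops X \<one>\<^bsub>G\<^esub>" "a k = loop_class X \<one>\<^bsub>G\<^esub> (rp a k)"
proof -
  have "a k \<in> carrier (fundamental_group X \<one>\<^bsub>G\<^esub>)" using assms by auto
  then have "\<exists>f. f \<in> loops X \<one>\<^bsub>G\<^esub> \<and> a k = loop_class X \<one>\<^bsub>G\<^esub> f" by (auto simp: fundamental_group_def)
  from someI_ex[OF this] show "rp a k \<in> loops X \<one>\<^bsub>G\<^esub>" "a k = loop_class X \<one>\<^bsub>G\<^esub> (rp a k)"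
    unfolding rp_def by auto
qed

lemma Jt_lft:
  assumes f: "\<And>k. k \<in> {1..r} \<Longrightarrow> f k \<in> loops X \<one>\<^bsub>G\<^esub>"
  shows "continuous_map I01 PXt (Jt Gt r (\<lambda>k. lft (f k)) r) \<and> Jt Gt r (\<lambda>k. lft (f k)) r 0 = trivt
     \<and> Jt Gt r (\<lambda>k. lft (f k)) r 1 = cend Gt r (\<lambda>k. lft (f k)) r
     \<and> (\<forall>t\<in>{0..1}. P (Jt Gt r (\<lambda>k. lft (f k)) r t) = Jn G r f r t)"
  by (rule Jt_props[OF f]) (use lft[OF f] in auto)

lemma cend_in: assumes f: "\<And>k. k \<in> {1..r} \<Longrightarrow> f k \<in> loops X \<one>\<^bsub>G\<^esub>"
  shows "cend Gt r (\<lambda>k. lft (f k)) r \<in> (\<Pi>\<^sub>E k\<in>{1..r}. carrier Gt)"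
    "\<And>k. k \<in> {1..r} \<Longrightarrow> p (cend Gt r (\<lambda>k. lft (f k)) r k) = \<one>\<^bsub>G\<^esub>"
  using lft_end[OF f] by (auto simp: cend_def)

lemma Phi_surj:
  assumes \<gamma>: "\<gamma> \<in> loops H0 triv"
  shows "\<exists>a\<in>carrier Pi1. loop_class H0 triv \<gamma> =
     ordprod FG (\<lambda>k. induced_pi1 H0 triv (factor_incl G r k) (a k)) r"
proof -
  define f where "f = (\<lambda>k t. \<gamma> t k)"
  have fl: "f k \<in> loops X \<one>\<^bsub>G\<^esub>" if k: "k \<in> {1..r}" for k
    using loops_compose[OF \<gamma> proj_cont[OF k]] k by (simp add: o_def f_def trivial_rep_def)
  define a where "a = (\<lambda>k\<in>{1..r}. loop_class X \<one>\<^bsub>G\<^esub> (f k))"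
  have a: "a \<in> carrier Pi1" using fl by (auto simp: a_def class_in_carrier)
  have ord: "ordprod FG (\<lambda>k. induced_pi1 H0 triv (factor_incl G r k) (a k)) r = loop_class H0 triv (Jn G r f r)"
    by (rule ordprod_Jn[OF fl]) (auto simp: a_def)
  define gt where "gt = (\<lambda>t. \<lambda>k\<in>{1..r}. lft (f k) t)"
  have cgt: "continuous_map I01 PXt gt"
    unfolding continuous_map_componentwise gt_def
    using lft(1)[OF fl] by (auto simp: pathin_def)
  have gt0: "gt 0 = trivt" using lft(2)[OF fl] by (auto simp: gt_def trivial_rep_def)
  have \<gamma>ext: "\<gamma> t \<in> extensional {1..r}" if "t \<in> {0..1}" for t
  proof -
    have "\<gamma> t \<in> topspace H0" using \<gamma> that by (auto simp: loops_def pathin_def continuous_map_def)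
    then have "\<gamma> t \<in> hom_set G r R" using comp_sub hs_topspace h0_topspace by auto
    then show ?thesis by (auto simp: hom_set_def PiE_def)
  qed
  have Pgt: "P (gt t) = \<gamma> t" if t: "t \<in> {0..1}" for t
    using lft(3)[OF fl t] \<gamma>ext[OF t] by (auto simp: P_def gt_def f_def extensional_def)
  have J: "continuous_map I01 PXt (Jt Gt r (\<lambda>k. lft (f k)) r) \<and> Jt Gt r (\<lambda>k. lft (f k)) r 0 = trivt
     \<and> Jt Gt r (\<lambda>k. lft (f k)) r 1 = cend Gt r (\<lambda>k. lft (f k)) r
     \<and> (\<forall>t\<in>{0..1}. P (Jt Gt r (\<lambda>k. lft (f k)) r t) = Jn G r f r t)" by (rule Jt_lft[OF fl])
  have ends: "gt 1 = cend Gt r (\<lambda>k. lft (f k)) r" by (auto simp: gt_def cend_def)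
  have Jc: "continuous_map I01 PXt (Jt Gt r (\<lambda>k. lft (f k)) r)" using J by blast
  have J0: "Jt Gt r (\<lambda>k. lft (f k)) r 0 = trivt" using J by blast
  have J1: "Jt Gt r (\<lambda>k. lft (f k)) r 1 = cend Gt r (\<lambda>k. lft (f k)) r" using J by blast
  have JP: "\<And>t. t \<in> {0..1} \<Longrightarrow> P (Jt Gt r (\<lambda>k. lft (f k)) r t) = Jn G r f r t" using J by blast
  have "loop_homotopic H0 triv \<gamma> (Jn G r f r)"
  proof (rule main_eq[OF \<gamma> Jn_loop[OF fl order_refl] cgt gt0 Pgt Jc J0 JP])
    show "gt 1 = Jt Gt r (\<lambda>k. lft (f k)) r 1" using ends J1 by (simp only:)
  qed (simp_all add: fl)
  then have "loop_class H0 triv \<gamma> = loop_class H0 triv (Jn G r f r)"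
    using loop_class_eq[OF \<gamma> Jn_loop[OF fl order_refl]] by simp
  then show ?thesis using a ord by auto
qed

lemma Phi_class:
  assumes a: "a \<in> carrier Pi1"
  shows "ordprod FG (\<lambda>k. induced_pi1 H0 triv (factor_incl G r k) (a k)) r = loop_class H0 triv (Jn G r (rp a) r)"
  by (rule ordprod_Jn) (use rp[OF a] in auto)

lemma Phi_inj:
  assumes a: "a \<in> carrier Pi1" and b: "b \<in> carrier Pi1"
    and eq: "ordprod FG (\<lambda>k. induced_pi1 H0 triv (factor_incl G r k) (a k)) r =
             ordprod FG (\<lambda>k. induced_pi1 H0 triv (factor_incl G r k) (b k)) r"
  shows "a = b"
proof (rule ext)
  fix k
  show "a k = b k"
  proof (cases "k \<in> {1..r}")
    case False then show ?thesis using a b by (auto simp: PiE_def extensional_def)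
  next
    case k: True
    have fl: "\<And>k. k \<in> {1..r} \<Longrightarrow> rp a k \<in> loops X \<one>\<^bsub>G\<^esub>" "\<And>k. k \<in> {1..r} \<Longrightarrow> rp b k \<in> loops X \<one>\<^bsub>G\<^esub>"
      using rp a b by auto
    have "loop_class H0 triv (Jn G r (rp a) r) = loop_class H0 triv (Jn G r (rp b) r)"
      using eq Phi_class[OF a] Phi_class[OF b] by simp
    then have "loop_homotopic H0 triv (Jn G r (rp a) r) (Jn G r (rp b) r)"
      using loop_class_eq[OF Jn_loop[where f="rp a", OF fl(1) order_refl] Jn_loop[where f="rp b", OF fl(2) order_refl]] by simp
    from lh_compose[OF this proj_cont[OF k]]
    have "loop_homotopic X \<one>\<^bsub>G\<^esub> (\<lambda>t. Jn G r (rp a) r t k) (\<lambda>t. Jn G r (rp b) r t k)"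
      using k by (simp add: o_def trivial_rep_def)
    moreover have "loop_homotopic X \<one>\<^bsub>G\<^esub> (\<lambda>t. Jn G r (rp a) r t k) (rp a k)"
      using proj_Jn[where f="rp a", OF fl(1) k order_refl] k by simp
    moreover have "loop_homotopic X \<one>\<^bsub>G\<^esub> (\<lambda>t. Jn G r (rp b) r t k) (rp b k)"
      using proj_Jn[where f="rp b", OF fl(2) k order_refl] k by simp
    ultimately have lh: "loop_homotopic X \<one>\<^bsub>G\<^esub> (rp a k) (rp b k)"
      by (meson lh_trans lh_sym)
    have "loop_class X \<one>\<^bsub>G\<^esub> (rp a k) = loop_class X \<one>\<^bsub>G\<^esub> (rp b k)"
      using loop_class_eq[OF rp(1)[OF a k] rp(1)[OF b k]] lh by simp
    then show ?thesis using rp(2)[OF a k] rp(2)[OF b k] by simp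
  qed
qed

end




context setting begin

lemma mulv_triv: assumes "c \<in> (\<Pi>\<^sub>E k\<in>{1..r}. carrier Gt)" shows "mulv Gt r c trivt = c"
proof -
  have "c k \<otimes>\<^bsub>Gt\<^esub> \<one>\<^bsub>Gt\<^esub> = c k" if "k \<in> {1..r}" for k
    using assms that grGt by (auto simp: group.is_monoid monoid.r_one PiE_iff)
  then show ?thesis using assms by (auto simp: mulv_def trivial_rep_def PiE_iff extensional_def)
qed

lemma Phi_mult:
  assumes a: "a \<in> carrier Pi1" and b: "b \<in> carrier Pi1"
  shows "ordprod FG (\<lambda>k. induced_pi1 H0 triv (factor_incl G r k) ((a \<otimes>\<^bsub>Pi1\<^esub> b) k)) r =
         ordprod FG (\<lambda>k. induced_pi1 H0 triv (factor_incl G r k) (a k)) r \<otimes>\<^bsub>FG\<^esub>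
         ordprod FG (\<lambda>k. induced_pi1 H0 triv (factor_incl G r k) (b k)) r"
proof -
  define f where "f = rp a"
  define g where "g = rp b"
  have fl: "\<And>k. k \<in> {1..r} \<Longrightarrow> f k \<in> loops X \<one>\<^bsub>G\<^esub>" using rp(1)[OF a] by (simp add: f_def)
  have gl: "\<And>k. k \<in> {1..r} \<Longrightarrow> g k \<in> loops X \<one>\<^bsub>G\<^esub>" using rp(1)[OF b] by (simp add: g_def)
  define h where "h = (\<lambda>k. path_join (f k) (g k))"
  have hl: "\<And>k. k \<in> {1..r} \<Longrightarrow> h k \<in> loops X \<one>\<^bsub>G\<^esub>" using fl gl by (simp add: h_def join_loops)
  have abk: "(a \<otimes>\<^bsub>Pi1\<^esub> b) k = loop_class X \<one>\<^bsub>G\<^esub> (h k)" if k: "k \<in> {1..r}" for k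
  proof -
    have "(a \<otimes>\<^bsub>Pi1\<^esub> b) k = a k \<otimes>\<^bsub>fundamental_group X \<one>\<^bsub>G\<^esub>\<^esub> b k"
      using k by (simp add: product_group_def)
    also have "\<dots> = loop_class X \<one>\<^bsub>G\<^esub> (h k)"
      using rp(2)[OF a k] rp(2)[OF b k] mult_class[OF fl[OF k] gl[OF k]] by (simp add: h_def f_def g_def)
    finally show ?thesis .
  qed
  have L: "ordprod FG (\<lambda>k. induced_pi1 H0 triv (factor_incl G r k) ((a \<otimes>\<^bsub>Pi1\<^esub> b) k)) r = loop_class H0 triv (Jn G r h r)"
    by (rule ordprod_Jn[OF hl abk order_refl])
  have R: "ordprod FG (\<lambda>k. induced_pi1 H0 triv (factor_incl G r k) (a k)) r \<otimes>\<^bsub>FG\<^esub>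
         ordprod FG (\<lambda>k. induced_pi1 H0 triv (factor_incl G r k) (b k)) r
         = loop_class H0 triv (path_join (Jn G r f r) (Jn G r g r))"
    using Phi_class[OF a] Phi_class[OF b] mult_class[OF Jn_loop[OF fl order_refl] Jn_loop[OF gl order_refl]]
    by (simp add: f_def g_def)
  define ht where "ht = (\<lambda>k. path_join (lft (f k)) (\<lambda>t. lft (f k) 1 \<otimes>\<^bsub>Gt\<^esub> lft (g k) t))"
  have htJ: "continuous_map I01 PXt (Jt Gt r ht r) \<and> Jt Gt r ht r 0 = trivt \<and> Jt Gt r ht r 1 = cend Gt r ht r
     \<and> (\<forall>t\<in>{0..1}. P (Jt Gt r ht r t) = Jn G r h r t)"
    by (rule Jt_props[OF hl]) (use lift_join[OF fl gl] in \<open>auto simp: ht_def h_def\<close>)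
  have Jf: "continuous_map I01 PXt (Jt Gt r (\<lambda>k. lft (f k)) r) \<and> Jt Gt r (\<lambda>k. lft (f k)) r 0 = trivt
     \<and> Jt Gt r (\<lambda>k. lft (f k)) r 1 = cend Gt r (\<lambda>k. lft (f k)) r
     \<and> (\<forall>t\<in>{0..1}. P (Jt Gt r (\<lambda>k. lft (f k)) r t) = Jn G r f r t)" by (rule Jt_lft[OF fl])
  have Jg: "continuous_map I01 PXt (Jt Gt r (\<lambda>k. lft (g k)) r) \<and> Jt Gt r (\<lambda>k. lft (g k)) r 0 = trivt
     \<and> Jt Gt r (\<lambda>k. lft (g k)) r 1 = cend Gt r (\<lambda>k. lft (g k)) r
     \<and> (\<forall>t\<in>{0..1}. P (Jt Gt r (\<lambda>k. lft (g k)) r t) = Jn G r g r t)" by (rule Jt_lft[OF gl])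
  define c where "c = cend Gt r (\<lambda>k. lft (f k)) r"
  have cin: "c \<in> (\<Pi>\<^sub>E k\<in>{1..r}. carrier Gt)" "\<And>k. k \<in> {1..r} \<Longrightarrow> p (c k) = \<one>\<^bsub>G\<^esub>"
    using cend_in[OF fl] by (auto simp: c_def)
  define B where "B = path_join (Jt Gt r (\<lambda>k. lft (f k)) r) (\<lambda>t. mulv Gt r c (Jt Gt r (\<lambda>k. lft (g k)) r t))"
  have cB: "continuous_map I01 PXt B"
  proof -
    have "pathin PXt (\<lambda>t. mulv Gt r c (Jt Gt r (\<lambda>k. lft (g k)) r t))"
      unfolding pathin_def by (rule mulv_cont[OF cin(1)]) (use Jg in blast)
    moreover have "Jt Gt r (\<lambda>k. lft (f k)) r 1 = mulv Gt r c (Jt Gt r (\<lambda>k. lft (g k)) r 0)"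
      using Jf Jg mulv_triv[OF cin(1)] by (simp add: c_def)
    ultimately have "pathin PXt B" unfolding B_def using Jf by (intro pathin_join) (auto simp: pathin_def)
    then show ?thesis by (simp add: pathin_def)
  qed
  have B0: "B 0 = trivt" using Jf by (simp add: B_def path_join_def)
  have PB: "P (B t) = path_join (Jn G r f r) (Jn G r g r) t" if t: "t \<in> {0..1}" for t
  proof (cases "t \<le> 1/2")
    case True then have "2 * t \<in> {0..1}" using t by auto
    then show ?thesis using True Jf by (simp add: B_def path_join_def)
  next
    case False then have t2: "2 * t - 1 \<in> {0..1}" using t by auto
    have inG: "Jt Gt r (\<lambda>k. lft (g k)) r (2 * t - 1) \<in> (\<Pi>\<^sub>E k\<in>{1..r}. carrier Gt)"
      using Jg t2 carGt by (auto simp: continuous_map_def)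
    have "P (mulv Gt r c (Jt Gt r (\<lambda>k. lft (g k)) r (2 * t - 1))) = P (Jt Gt r (\<lambda>k. lft (g k)) r (2 * t - 1))"
      by (rule P_mulv[OF cin(1) cin(2) inG])
    then show ?thesis using False Jg t2 by (simp add: B_def path_join_def)
  qed
  have ends: "Jt Gt r ht r 1 = B 1"
  proof -
    have "Jt Gt r ht r 1 = cend Gt r ht r" using htJ by blast
    also have "\<dots> = (\<lambda>k\<in>{1..r}. lft (f k) 1 \<otimes>\<^bsub>Gt\<^esub> lft (g k) 1)"
      using lift_join(4)[OF fl gl] by (auto simp: cend_def ht_def)
    also have "\<dots> = mulv Gt r c (cend Gt r (\<lambda>k. lft (g k)) r)"
      by (auto simp: mulv_def c_def cend_def)
    also have "\<dots> = B 1" using Jg by (simp add: B_def path_join_def)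
    finally show ?thesis .
  qed
  have hJ1: "continuous_map I01 PXt (Jt Gt r ht r)" "Jt Gt r ht r 0 = trivt"
    "\<And>t. t \<in> {0..1} \<Longrightarrow> P (Jt Gt r ht r t) = Jn G r h r t" using htJ by blast+
  have "loop_homotopic H0 triv (Jn G r h r) (path_join (Jn G r f r) (Jn G r g r))"
    by (rule main_eq[OF Jn_loop[OF hl order_refl] join_loops[OF Jn_loop[OF fl order_refl] Jn_loop[OF gl order_refl]]
          hJ1 cB B0 PB ends])
  then show ?thesis unfolding L R
    using loop_class_eq[OF Jn_loop[OF hl order_refl] join_loops[OF Jn_loop[OF fl order_refl] Jn_loop[OF gl order_refl]]]
    by simp
qed

lemma Phi_iso:
  "(\<lambda>a. ordprod FG (\<lambda>k. induced_pi1 H0 triv (factor_incl G r k) (a k)) r) \<in> iso Pi1 FG"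
proof -
  let ?\<Phi> = "\<lambda>a. ordprod FG (\<lambda>k. induced_pi1 H0 triv (factor_incl G r k) (a k)) r"
  have car: "?\<Phi> a \<in> carrier FG" if a: "a \<in> carrier Pi1" for a
    using Phi_class[OF a] class_in_carrier[OF Jn_loop[OF rp(1)[OF a] order_refl]] by simp
  have hom: "?\<Phi> \<in> hom Pi1 FG"
    unfolding hom_def using car Phi_mult by auto
  have inj: "inj_on ?\<Phi> (carrier Pi1)" using Phi_inj by (auto simp: inj_on_def)
  have "carrier FG \<subseteq> ?\<Phi> ` carrier Pi1"
  proof
    fix x assume "x \<in> carrier FG"
    then obtain \<gamma> where \<gamma>: "\<gamma> \<in> loops H0 triv" "x = loop_class H0 triv \<gamma>" by (auto simp: fundamental_group_def)
    then show "x \<in> ?\<Phi> ` carrier Pi1" using Phi_surj[OF \<gamma>(1)] by auto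
  qed
  then have "?\<Phi> ` carrier Pi1 = carrier FG" using car by auto
  then show ?thesis using hom inj by (simp add: iso_def bij_betw_def)
qed

end

theorem lemma2p6:
  fixes X :: "'g topology" and G :: "'g monoid"
    and Xt :: "'h topology" and Gt :: "'h monoid"
    and p :: "'h \<Rightarrow> 'g"
    and r :: nat and R :: "word set"
  assumes G_lie: "lie_group X G" and G_conn: "connected_space X"
    and Gt_lie: "lie_group Xt Gt" and Gt_sc: "simply_connected_space Xt"
    and p_hom: "p \<in> hom Gt G" and p_cov: "covering_map Xt X p"
    and R_fin: "finite R"
    and R_gens: "\<forall>w\<in>R. \<forall>(i, b)\<in>set w. i \<in> {1..r}"
    and R_canc: "\<forall>w\<in>R. exponent_canceling_word w"
    and Hom_sc: "simply_connected_space (hom_space Xt Gt r R)"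
  shows "(\<lambda>a. ordprod (fundamental_group (hom0_space X G r R) (trivial_rep G r))
              (\<lambda>k. induced_pi1 (hom0_space X G r R) (trivial_rep G r) (factor_incl G r k) (a k)) r)
         \<in> iso (product_group {1..r} (\<lambda>k. fundamental_group X \<one>\<^bsub>G\<^esub>))
               (fundamental_group (hom0_space X G r R) (trivial_rep G r))"
proof -
  interpret setting X G Xt Gt p r R
  proof
    show "topological_group X G" using G_lie by (simp add: lie_group_def)
    show "topological_group Xt Gt" using Gt_lie by (simp add: lie_group_def)
  qed (use G_conn p_hom p_cov R_gens R_canc Hom_sc in auto)
  show ?thesis by (rule Phi_iso)
qed



end
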